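(* Let $G=(V,E)$ be a finite simple graph with at least one vertex and let $k\ge3$ be an integer. Then $G$ has branch-width less than $k$ if and only if $G$ has an $S_k$-tree over $\mathcal F^*$, where $\mathcal F^*$ is the set of all stars $\{(A_1,B_1),(A_2,B_2),(A_3,B_3)\}\subseteq\vec S_k$ (elements not necessarily distinct) with $G[A_1]\cup G[A_2]\cup G[A_3]=G$.
   Context: An oriented vertex separation of $G$ is an ordered pair $(A,B)$ with $A\cup B=V$ and no edge between $A\setminus B$ and $B\setminus A$; $(A,B)\le(C,D)$ iff $A\subseteq C$ and $B\supseteq D$; $(A,B)^*=(B,A)$. $\vec S_k$ is the set of those with $|A\cap B|<k$, and $S_k$ the set of pairs $\{(A,B),(B,A)\}$ with $(A,B)\in\vec S_k$. A star is a nonempty set $\sigma$ with $\vec r\le\vec s^{\,*}$ for all distinct $\vec r,\vec s\in\sigma$. An $S_k$-tree is a pair $(T,\alpha)$, $T$ a finite tree with at least one edge, $\alpha$ mapping each ordered pair $(x,y)$ with $xy\in E(T)$ to $\vec S_k$ with $\alpha(y,x)=\alpha(x,y)^*$; it is over $\mathcal F^*$ if $\{\alpha(x,t):xt\in E(T)\}\in\mathcal F^*$ for every node $t$. A branch-decomposition of $G$ is a pair $(T,L)$ with $T$ a tree all of whose nodes have degree 1 or 3 and $L$ a bijection from $E$ to the leaves of $T$; the width of an edge $f$ of $T$ is the number of vertices of $G$ incident both with an edge mapped into one component of $T-f$ and with an edge mapped into the other; the width of $(T,L)$ is the maximum width of its edges; the branch-width of $G$ is the minimum width of a branch-decomposition,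 and is defined to be $0$ if $|E|\le1$. *)

theory Defs
  imports Main
begin

definition simple_graph :: "'a set \<Rightarrow> 'a set set \<Rightarrow> bool" where
  "simple_graph V E \<longleftrightarrow> finite V \<and>
     (\<forall>e\<in>E. \<exists>x y. x \<noteq> y \<and> e = {x, y} \<and> x \<in> V \<and> y \<in> V)"

definition is_sep :: "'a set \<Rightarrow> 'a set set \<Rightarrow> 'a set \<times> 'a set \<Rightarrow> bool" where
  "is_sep V E s \<longleftrightarrow> (case s of (A, B) \<Rightarrow>
     A \<union> B = V \<and> \<not> (\<exists>e\<in>E. \<exists>x y. e = {x, y} \<and> x \<in> A - B \<and> y \<in> B - A))"

definition sep_le :: "'a set \<times> 'a set \<Rightarrow> 'a set \<times> 'a set \<Rightarrow> bool" where
  "sep_le r s \<longleftrightarrow> fst r \<subseteq> fst s \<and> snd s \<subseteq> snd r"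

definition sep_inv :: "'a set \<times> 'a set \<Rightarrow> 'a set \<times> 'a set" where
  "sep_inv s = (snd s, fst s)"

definition vecS :: "'a set \<Rightarrow> 'a set set \<Rightarrow> nat \<Rightarrow> ('a set \<times> 'a set) set" where
  "vecS V E k = {s. is_sep V E s \<and> card (fst s \<inter> snd s) < k}"

definition is_star :: "('a set \<times> 'a set) set \<Rightarrow> bool" where
  "is_star \<sigma> \<longleftrightarrow> \<sigma> \<noteq> {} \<and> (\<forall>r\<in>\<sigma>. \<forall>s\<in>\<sigma>. r \<noteq> s \<longrightarrow> sep_le r (sep_inv s))"

definition Fstar :: "'a set \<Rightarrow> 'a set set \<Rightarrow> nat \<Rightarrow> ('a set \<times> 'a set) set set" where
  "Fstar V E k = {\<sigma>. \<exists>s1 s2 s3. \<sigma> = {s1, s2, s3} \<and> \<sigma> \<subseteq> vecS V E k \<and> is_star \<sigma> \<and>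
      fst s1 \<union> fst s2 \<union> fst s3 = V \<and>
      (\<forall>e\<in>E. e \<subseteq> fst s1 \<or> e \<subseteq> fst s2 \<or> e \<subseteq> fst s3)}"

definition adj_rel :: "nat set set \<Rightarrow> (nat \<times> nat) set" where
  "adj_rel ET = {(x, y). {x, y} \<in> ET \<and> x \<noteq> y}"

definition is_cycle :: "nat set set \<Rightarrow> nat list \<Rightarrow> bool" where
  "is_cycle ET cs \<longleftrightarrow> length cs \<ge> 3 \<and> distinct cs \<and>
     (\<forall>i < length cs. {cs ! i, cs ! ((i + 1) mod length cs)} \<in> ET)"

definition is_tree :: "nat set \<Rightarrow> nat set set \<Rightarrow> bool" where
  "is_tree N ET \<longleftrightarrow> finite N \<and> N \<noteq> {} \<and>
     (\<forall>e\<in>ET. \<exists>x y. x \<noteq> y \<and> e = {x, y} \<and> x \<in> N \<and> y \<in> N) \<and>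
     (\<forall>x\<in>N. \<forall>y\<in>N. (x, y) \<in> (adj_rel ET)\<^sup>*) \<and>
     (\<nexists>cs. is_cycle ET cs)"

definition tdeg :: "nat set set \<Rightarrow> nat \<Rightarrow> nat" where
  "tdeg ET t = card {e\<in>ET. t \<in> e}"

definition has_Sk_tree_over_Fstar :: "'a set \<Rightarrow> 'a set set \<Rightarrow> nat \<Rightarrow> bool" where
  "has_Sk_tree_over_Fstar V E k \<longleftrightarrow>
     (\<exists>(N :: nat set) ET (\<alpha> :: nat \<Rightarrow> nat \<Rightarrow> 'a set \<times> 'a set).
        is_tree N ET \<and> ET \<noteq> {} \<and>
        (\<forall>x y. {x, y} \<in> ET \<and> x \<noteq> y \<longrightarrow>
            \<alpha> x y \<in> vecS V E k \<and> \<alpha> y x = sep_inv (\<alpha> x y)) \<and>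
        (\<forall>t\<in>N. {\<alpha> x t | x. {x, t} \<in> ET \<and> x \<noteq> t} \<in> Fstar V E k))"

definition branch_decomp :: "'a set set \<Rightarrow> nat set \<Rightarrow> nat set set \<Rightarrow> ('a set \<Rightarrow> nat) \<Rightarrow> bool" where
  "branch_decomp E N ET L \<longleftrightarrow> is_tree N ET \<and>
     (\<forall>t\<in>N. tdeg ET t = 1 \<or> tdeg ET t = 3) \<and>
     bij_betw L E {t\<in>N. tdeg ET t = 1}"

definition comp_minus :: "nat set set \<Rightarrow> nat set \<Rightarrow> nat \<Rightarrow> nat set" where
  "comp_minus ET f u = {w. (u, w) \<in> (adj_rel (ET - {f}))\<^sup>*}"

definition edge_width :: "'a set \<Rightarrow> 'a set set \<Rightarrow> nat set set \<Rightarrow> ('a set \<Rightarrow> nat) \<Rightarrow> nat set \<Rightarrow> nat" where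
  "edge_width V E ET L f = card {w\<in>V. \<exists>u v. f = {u, v} \<and>
      (\<exists>e1\<in>E. \<exists>e2\<in>E. w \<in> e1 \<and> w \<in> e2 \<and>
         L e1 \<in> comp_minus ET f u \<and> L e2 \<in> comp_minus ET f v)}"

definition decomp_width :: "'a set \<Rightarrow> 'a set set \<Rightarrow> nat set set \<Rightarrow> ('a set \<Rightarrow> nat) \<Rightarrow> nat" where
  "decomp_width V E ET L = Max (edge_width V E ET L ` ET)"

definition branchwidth :: "'a set \<Rightarrow> 'a set set \<Rightarrow> nat" where
  "branchwidth V E = (if card E \<le> 1 then 0
     else Inf {w. \<exists>N ET L. branch_decomp E N ET L \<and> w = decomp_width V E ET L})"

end

theory Submission
  imports Defs "HOL-Library.Transitive_Closure_Table" "HOL-Library.Nat_Bijection"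
begin


lemma path_nth:
  "rtrancl_path r x ys y \<Longrightarrow> i < length ys \<Longrightarrow> r ((x#ys)!i) (ys!i)"
proof (induction arbitrary: i rule: rtrancl_path.induct)
  case (base x) then show ?case by simp
next
  case (step x y ys z) then show ?case by (cases i) auto
qed

lemma path_last: "rtrancl_path r x ys y \<Longrightarrow> last (x#ys) = y"
  by (induction rule: rtrancl_path.induct) auto

lemma adj_rel_iff[simp]: "(x,y) \<in> adj_rel ET \<longleftrightarrow> {x,y} \<in> ET \<and> x \<noteq> y"
  by (simp add: adj_rel_def)

lemma tree_K:
  assumes T: "is_tree N ET" and ab: "{a,b} \<in> ET" "a \<noteq> b"
  shows "(a,b) \<notin> (adj_rel (ET - {{a,b}}))\<^sup>*"
proof
  assume "(a,b) \<in> (adj_rel (ET - {{a,b}}))\<^sup>*"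
  hence "(\<lambda>x y. (x,y) \<in> adj_rel (ET - {{a,b}}))\<^sup>*\<^sup>* a b"
    by (simp add: rtranclp_rtrancl_eq del: adj_rel_iff)
  then obtain ys0 where "rtrancl_path (\<lambda>x y. (x,y) \<in> adj_rel (ET - {{a,b}})) a ys0 b"
    by (auto simp: rtranclp_eq_rtrancl_path)
  then obtain ys where P: "rtrancl_path (\<lambda>x y. (x,y) \<in> adj_rel (ET - {{a,b}})) a ys b"
    and D: "distinct (a#ys)" by (rule rtrancl_path_distinct)
  have L: "last (a#ys) = b" using P by (rule path_last)
  have "ys \<noteq> []" using L ab by auto
  moreover have "ys \<noteq> [b]"
  proof
    assume "ys = [b]"
    with path_nth[OF P, of 0] show False by auto
  qed
  ultimately have len: "length ys \<ge> 2"
    using L by (cases ys; cases "tl ys"; auto)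
  have "is_cycle ET (a#ys)"
    unfolding is_cycle_def
  proof (intro conjI allI impI)
    show "3 \<le> length (a#ys)" using len by simp
    show "distinct (a#ys)" by fact
    fix i assume i: "i < length (a#ys)"
    show "{(a#ys) ! i, (a#ys) ! ((i + 1) mod length (a#ys))} \<in> ET"
    proof (cases "i < length ys")
      case True
      hence "(i+1) mod length (a#ys) = i+1" by simp
      with path_nth[OF P True] show ?thesis by auto
    next
      case False
      hence "i = length ys" using i by simp
      hence "(i+1) mod length (a#ys) = 0" and "(a#ys)!i = last (a#ys)"
        using \<open>ys \<noteq> []\<close> by (auto simp: last_conv_nth)
      with L ab show ?thesis by (auto simp: insert_commute)
    qed
  qed
  with T show False unfolding is_tree_def by blast
qed

lemma adj_sym: "sym (adj_rel ET)"
  by (auto simp: sym_def insert_commute)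

lemma rt_sym: "(x,y) \<in> (adj_rel ET)\<^sup>* \<Longrightarrow> (y,x) \<in> (adj_rel ET)\<^sup>*"
  using sym_rtrancl[OF adj_sym] by (auto simp: sym_def)

lemma tree_reach_N:
  assumes T: "is_tree N ET" and u: "u \<in> N" and r: "(u,w) \<in> (adj_rel ET')\<^sup>*" and sub: "ET' \<subseteq> ET"
  shows "w \<in> N"
  using r
proof (induction rule: rtrancl_induct)
  case base then show ?case using u .
next
  case (step y z)
  hence "{y,z} \<in> ET" using sub by auto
  with T show ?case unfolding is_tree_def by (auto simp: doubleton_eq_iff)
qed

lemma tree_edge_N:
  assumes T: "is_tree N ET" and "{u,v} \<in> ET" shows "u \<in> N" "v \<in> N"
  using assms unfolding is_tree_def by (auto simp: doubleton_eq_iff)+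

lemma tree_edge_neq:
  assumes T: "is_tree N ET" and "{u,v} \<in> ET" shows "u \<noteq> v"
  using assms unfolding is_tree_def by (metis doubleton_eq_iff insert_absorb2 singleton_insert_inj_eq)

lemma comp_finite:
  assumes T: "is_tree N ET" and e: "{u,v} \<in> ET"
  shows "comp_minus ET f v \<subseteq> N" "finite (comp_minus ET f v)"
proof -
  show "comp_minus ET f v \<subseteq> N"
    unfolding comp_minus_def using tree_reach_N[OF T tree_edge_N(2)[OF T e]] by blast
  then show "finite (comp_minus ET f v)" using T unfolding is_tree_def by (meson finite_subset)
qed

lemma comp_self: "u \<in> comp_minus ET f u"
  unfolding comp_minus_def by simp

lemma tree_cover:
  assumes T: "is_tree N ET" and e: "{u,v} \<in> ET" and t: "t \<in> N"
  shows "t \<in> comp_minus ET {u,v} u \<union> comp_minus ET {u,v} v"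
proof -
  have "(u,t) \<in> (adj_rel ET)\<^sup>*" using T t tree_edge_N[OF T e] unfolding is_tree_def by blast
  then show ?thesis
  proof (induction rule: rtrancl_induct)
    case base then show ?case by (simp add: comp_self)
  next
    case (step y z)
    show ?case
    proof (cases "{y,z} = {u,v}")
      case True
      then have "z = u \<or> z = v" by (auto simp: doubleton_eq_iff)
      then show ?thesis using comp_self by blast
    next
      case False
      hence "(y,z) \<in> adj_rel (ET - {{u,v}})" using step by auto
      from step.IH show ?thesis
      proof
        assume "y \<in> comp_minus ET {u,v} u"
        thus ?thesis using \<open>(y,z) \<in> adj_rel (ET - {{u,v}})\<close> unfolding comp_minus_def
          by (simp add: rtrancl.rtrancl_into_rtrancl del: adj_rel_iff)
      next
        assume "y \<in> comp_minus ET {u,v} v"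
        thus ?thesis using \<open>(y,z) \<in> adj_rel (ET - {{u,v}})\<close> unfolding comp_minus_def
          by (simp add: rtrancl.rtrancl_into_rtrancl del: adj_rel_iff)
      qed
    qed
  qed
qed

lemma tree_disj:
  assumes T: "is_tree N ET" and e: "{u,v} \<in> ET"
  shows "comp_minus ET {u,v} u \<inter> comp_minus ET {u,v} v = {}"
proof (rule ccontr)
  assume "comp_minus ET {u,v} u \<inter> comp_minus ET {u,v} v \<noteq> {}"
  then obtain z where "(u,z) \<in> (adj_rel (ET - {{u,v}}))\<^sup>*" "(v,z) \<in> (adj_rel (ET - {{u,v}}))\<^sup>*"
    unfolding comp_minus_def by auto
  hence "(u,v) \<in> (adj_rel (ET - {{u,v}}))\<^sup>*" by (meson rt_sym rtrancl_trans)
  with tree_K[OF T e tree_edge_neq[OF T e]] show False by simp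
qed

lemma tree_sub:
  assumes T: "is_tree N ET" and e1: "{u,v} \<in> ET" and e2: "{v,w} \<in> ET" and wu: "w \<noteq> u"
  shows "comp_minus ET {v,w} w \<subseteq> comp_minus ET {u,v} v"
proof
  fix z assume "z \<in> comp_minus ET {v,w} w"
  hence "(w,z) \<in> (adj_rel (ET - {{v,w}}))\<^sup>*" unfolding comp_minus_def by simp
  then show "z \<in> comp_minus ET {u,v} v"
  proof (induction rule: rtrancl_induct)
    case base
    have "v \<noteq> w" using tree_edge_neq[OF T e2] .
    moreover have "{v,w} \<noteq> {u,v}" using wu \<open>v\<noteq>w\<close> by (auto simp: doubleton_eq_iff)
    ultimately have "(v,w) \<in> adj_rel (ET - {{u,v}})" using e2 by auto
    then show ?case unfolding comp_minus_def by (simp add: r_into_rtrancl)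
  next
    case (step y z)
    show ?case
    proof (cases "{y,z} = {u,v}")
      case False
      hence "(y,z) \<in> adj_rel (ET - {{u,v}})" using step by auto
      then show ?thesis using step.IH unfolding comp_minus_def
        by (simp add: rtrancl.rtrancl_into_rtrancl)
    next
      case True
      hence "v = y \<or> v = z" by (auto simp: doubleton_eq_iff)
      hence "(w,v) \<in> (adj_rel (ET - {{v,w}}))\<^sup>*"
      proof
        assume "v = y" thus ?thesis using step.hyps(1) by simp
      next
        assume "v = z" thus ?thesis using step.hyps by (simp add: rtrancl.rtrancl_into_rtrancl)
      qed
      moreover have "{w,v} \<in> ET" "w \<noteq> v" using e2 tree_edge_neq[OF T e2] by (auto simp: insert_commute)
      ultimately show ?thesis using tree_K[OF T, of w v] by (simp add: insert_commute)
    qed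
  qed
qed

lemma tree_notin:
  assumes T: "is_tree N ET" and e2: "{v,w} \<in> ET"
  shows "v \<notin> comp_minus ET {v,w} w"
proof
  assume "v \<in> comp_minus ET {v,w} w"
  hence "(w,v) \<in> (adj_rel (ET - {{w,v}}))\<^sup>*" unfolding comp_minus_def by (simp add: insert_commute)
  moreover have "{w,v} \<in> ET" "w \<noteq> v" using e2 tree_edge_neq[OF T e2] by (auto simp: insert_commute)
  ultimately show False using tree_K[OF T] by blast
qed

lemma tree_psub:
  assumes T: "is_tree N ET" and e1: "{u,v} \<in> ET" and e2: "{v,w} \<in> ET" and wu: "w \<noteq> u"
  shows "comp_minus ET {v,w} w \<subset> comp_minus ET {u,v} v"
  using tree_sub[OF assms] tree_notin[OF T e2] comp_self by blast

lemma tree_split: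
  assumes T: "is_tree N ET" and e1: "{u,v} \<in> ET"
  shows "comp_minus ET {u,v} v \<subseteq> {v} \<union> \<Union>{comp_minus ET {v,w} w |w. {v,w} \<in> ET \<and> w \<noteq> u}"
proof
  fix z assume "z \<in> comp_minus ET {u,v} v"
  hence "(v,z) \<in> (adj_rel (ET - {{u,v}}))\<^sup>*" unfolding comp_minus_def by simp
  then show "z \<in> {v} \<union> \<Union>{comp_minus ET {v,w} w |w. {v,w} \<in> ET \<and> w \<noteq> u}"
  proof (induction rule: rtrancl_induct)
    case base then show ?case by simp
  next
    case (step y z)
    from step.hyps(2) have g: "{y,z} \<in> ET" "{y,z} \<noteq> {u,v}" "y \<noteq> z" by auto
    from step.IH show ?case
    proof
      assume "y \<in> {v}"
      hence "y = v" by simp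
      with g have "z \<noteq> u" by auto
      with g \<open>y = v\<close> show ?thesis using comp_self by blast
    next
      assume "y \<in> \<Union>{comp_minus ET {v,w} w |w. {v,w} \<in> ET \<and> w \<noteq> u}"
      then obtain w where w: "{v,w} \<in> ET" "w \<noteq> u" "y \<in> comp_minus ET {v,w} w" by auto
      show ?thesis
      proof (cases "{y,z} = {v,w}")
        case True
        hence "z = v \<or> z = w" by (auto simp: doubleton_eq_iff)
        then show ?thesis using w comp_self by blast
      next
        case False
        hence "(y,z) \<in> adj_rel (ET - {{v,w}})" using g by auto
        hence "z \<in> comp_minus ET {v,w} w" using w(3) unfolding comp_minus_def
          by (simp add: rtrancl.rtrancl_into_rtrancl)
        then show ?thesis using w by blast
      qed
    qed
  qed
qed

lemma tree_disj2:
  assumes T: "is_tree N ET" and e1: "{v,w1} \<in> ET" and e2: "{v,w2} \<in> ET" and ne: "w1 \<noteq> w2"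
  shows "comp_minus ET {v,w1} w1 \<inter> comp_minus ET {v,w2} w2 = {}"
proof -
  have "{w1,v} \<in> ET" using e1 by (simp add: insert_commute)
  have "comp_minus ET {v,w2} w2 \<subseteq> comp_minus ET {w1,v} v"
    using tree_sub[OF T \<open>{w1,v} \<in> ET\<close> e2] ne by auto
  moreover have "comp_minus ET {w1,v} w1 \<inter> comp_minus ET {w1,v} v = {}"
    using tree_disj[OF T \<open>{w1,v} \<in> ET\<close>] .
  ultimately show ?thesis by (auto simp: insert_commute)
qed



datatype 'b bt = Lf 'b | Nd "'b bt" "'b bt"

fun items :: "'b bt \<Rightarrow> 'b set" where
  "items (Lf x) = {x}" | "items (Nd l r) = items l \<union> items r"

fun wfbt :: "'b bt \<Rightarrow> bool" where
  "wfbt (Lf x) = True" | "wfbt (Nd l r) = (wfbt l \<and> wfbt r \<and> items l \<inter> items r = {})"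

fun subtrees :: "'b bt \<Rightarrow> 'b bt set" where
  "subtrees (Lf x) = {Lf x}" | "subtrees (Nd l r) = insert (Nd l r) (subtrees l \<union> subtrees r)"

definition bnd :: "'a set set \<Rightarrow> 'a set set \<Rightarrow> 'a set" where
  "bnd U P = \<Union>P \<inter> \<Union>(U - P)"

definition okbt :: "'a set set \<Rightarrow> nat \<Rightarrow> 'a set bt \<Rightarrow> bool" where
  "okbt U k t = (wfbt t \<and> (\<forall>s\<in>subtrees t. card (bnd U (items s)) < k))"

definition okset :: "'a set set \<Rightarrow> nat \<Rightarrow> 'a set set \<Rightarrow> bool" where
  "okset U k P = (\<exists>t. items t = P \<and> okbt U k t)"

definition okset0 :: "'a set set \<Rightarrow> nat \<Rightarrow> 'a set set \<Rightarrow> bool" where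
  "okset0 U k P = (P = {} \<or> okset U k P)"

lemma items_ne: "items t \<noteq> {}"
  by (induction t) auto

lemma self_subtree: "t \<in> subtrees t"
  by (cases t) auto

lemma okset_join:
  assumes "okset0 U k P1" "okset0 U k P2" "P1 \<inter> P2 = {}"
    and "P1 \<noteq> {} \<Longrightarrow> P2 \<noteq> {} \<Longrightarrow> card (bnd U (P1 \<union> P2)) < k"
  shows "okset0 U k (P1 \<union> P2)"
proof (cases "P1 = {} \<or> P2 = {}")
  case True then show ?thesis using assms(1,2) by auto
next
  case False
  then obtain t1 t2 where t: "items t1 = P1" "okbt U k t1" "items t2 = P2" "okbt U k t2"
    using assms(1,2) unfolding okset0_def okset_def by blast
  have "okbt U k (Nd t1 t2)" using t assms(3,4) False unfolding okbt_def by auto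
  then show ?thesis using t unfolding okset0_def okset_def by (metis items.simps(2))
qed

lemma okset_single:
  assumes "finite e" "card e < k"
  shows "okset0 U k {e}"
proof -
  have "bnd U {e} \<subseteq> e" unfolding bnd_def by auto
  hence "card (bnd U {e}) < k" using assms by (meson card_mono le_less_trans)
  hence "okbt U k (Lf e)" unfolding okbt_def by simp
  then show ?thesis unfolding okset0_def okset_def by (metis items.simps(1))
qed

lemma okset_grow:
  assumes "finite F0" "okset0 U k P" "P \<inter> F0 = {}"
    and "\<And>T. P \<subseteq> T \<Longrightarrow> T \<subseteq> P \<union> F0 \<Longrightarrow> card (bnd U T) < k"
    and "\<And>e. e \<in> F0 \<Longrightarrow> finite e \<and> card e < k"
  shows "okset0 U k (P \<union> F0)"
  using assms
proof (induction F0 rule: finite_induct)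
  case empty then show ?case by simp
next
  case (insert x F)
  have "okset0 U k (P \<union> F)"
  proof (rule insert.IH)
    show "okset0 U k P" "P \<inter> F = {}" using insert.prems by auto
    show "card (bnd U T) < k" if "P \<subseteq> T" "T \<subseteq> P \<union> F" for T
      using insert.prems(3) that by auto
    show "finite e \<and> card e < k" if "e \<in> F" for e using insert.prems(4) that by auto
  qed
  moreover have "okset0 U k {x}" using insert.prems(4) okset_single by blast
  moreover have "(P \<union> F) \<inter> {x} = {}" using insert by auto
  moreover have "card (bnd U (P \<union> F \<union> {x})) < k" using insert.prems(3)[of "P \<union> F \<union> {x}"] by auto
  ultimately have "okset0 U k (P \<union> F \<union> {x})" by (rule okset_join)
  then show ?case by (simp add: Un_commute Un_left_commute)
qed

definition EB :: "'a set set \<Rightarrow> 'a set \<Rightarrow> 'a set set" where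
  "EB E X = {e\<in>E. e \<subseteq> X}"

lemma sep_edge:
  assumes "simple_graph V E" "is_sep V E (A,B)" "e \<in> E"
  shows "e \<subseteq> A \<or> e \<subseteq> B"
proof -
  obtain x y where e: "x \<noteq> y" "e = {x,y}" "x \<in> V" "y \<in> V" using assms(1,3) unfolding simple_graph_def by blast
  have AB: "A \<union> B = V" and ns: "\<not> (\<exists>e\<in>E. \<exists>x y. e = {x, y} \<and> x \<in> A - B \<and> y \<in> B - A)"
    using assms(2) unfolding is_sep_def by auto
  show ?thesis
  proof (rule ccontr)
    assume "\<not> ?thesis"
    then have "(x \<in> A - B \<and> y \<in> B - A) \<or> (y \<in> A - B \<and> x \<in> B - A)" using e AB by auto
    then show False using ns assms(3) e(2) by (metis insert_commute)
  qed
qed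

lemma edge_card:
  assumes "simple_graph V E" "e \<in> E" shows "finite e" "card e = 2"
  using assms unfolding simple_graph_def by auto

lemma sep_inv_simps[simp]: "fst (sep_inv s) = snd s" "snd (sep_inv s) = fst s"
  by (auto simp: sep_inv_def)



lemma simple_finite_E: "simple_graph V E \<Longrightarrow> finite E"
proof -
  assume G: "simple_graph V E"
  hence "E \<subseteq> Pow V" unfolding simple_graph_def by auto
  moreover have "finite V" using G unfolding simple_graph_def by auto
  ultimately show "finite E" by (meson finite_Pow_iff finite_subset)
qed

lemma simple_edge_sub: "simple_graph V E \<Longrightarrow> e \<in> E \<Longrightarrow> e \<subseteq> V"
  unfolding simple_graph_def by auto

locale skt =
  fixes V :: "'a set" and E :: "'a set set" and k :: nat and N :: "nat set" and ET :: "nat set set"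
    and \<alpha> :: "nat \<Rightarrow> nat \<Rightarrow> 'a set \<times> 'a set"
  assumes G: "simple_graph V E" and k3: "k \<ge> 3" and T: "is_tree N ET"
    and edg: "\<And>x y. {x,y} \<in> ET \<Longrightarrow> x \<noteq> y \<Longrightarrow> \<alpha> x y \<in> vecS V E k \<and> \<alpha> y x = sep_inv (\<alpha> x y)"
    and star: "\<And>t. t \<in> N \<Longrightarrow> {\<alpha> x t | x. {x,t} \<in> ET \<and> x \<noteq> t} \<in> Fstar V E k"
begin

lemma edge_small: "e \<in> E \<Longrightarrow> finite e \<and> card e < k"
  using edge_card[OF G] k3 by auto

lemma Q:
  assumes "{x,t} \<in> ET" "x \<noteq> t" "F \<noteq> {}" "F \<subseteq> EB E (snd (\<alpha> x t))" "E - F \<subseteq> EB E (fst (\<alpha> x t))"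
  shows "okset E k F"
  using assms
proof (induction "card (comp_minus ET {x,t} t)" arbitrary: x t F rule: less_induct)
  case less
  define A where "A = fst (\<alpha> x t)"
  define B where "B = snd (\<alpha> x t)"
  define ax where "ax = \<alpha> x t"
  have tN: "t \<in> N" using tree_edge_N[OF T less.prems(1)] by simp
  define \<sigma> where "\<sigma> = {\<alpha> z t | z. {z,t} \<in> ET \<and> z \<noteq> t}"
  have "\<sigma> \<in> Fstar V E k" using star[OF tN] unfolding \<sigma>_def .
  then obtain s1 s2 s3 where \<sigma>3: "\<sigma> = {s1,s2,s3}" and vec: "\<sigma> \<subseteq> vecS V E k" and st: "is_star \<sigma>"
    and cov: "\<forall>e\<in>E. e \<subseteq> fst s1 \<or> e \<subseteq> fst s2 \<or> e \<subseteq> fst s3"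
    unfolding Fstar_def by blast
  have axs: "ax \<in> \<sigma>" unfolding \<sigma>_def ax_def using less.prems(1,2) by blast
  have starp: "\<And>r s. r \<in> \<sigma> \<Longrightarrow> s \<in> \<sigma> \<Longrightarrow> r \<noteq> s \<Longrightarrow> fst r \<subseteq> snd s"
    using st unfolding is_star_def sep_le_def by auto
  have cover: "\<And>e. e \<in> E \<Longrightarrow> \<exists>s\<in>\<sigma>. e \<subseteq> fst s" using cov \<sigma>3 by auto
  have finC: "finite (comp_minus ET {x,t} t)" using comp_finite[OF T less.prems(1)] by simp
  have IHs: "okset E k Gr" if s: "s \<in> \<sigma>" "s \<noteq> ax" and Gr: "Gr \<noteq> {}" "Gr \<subseteq> EB E (fst s)" "E - Gr \<subseteq> EB E (snd s)"
    for s Gr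
  proof -
    obtain y where y: "s = \<alpha> y t" "{y,t} \<in> ET" "y \<noteq> t" using s(1) unfolding \<sigma>_def by blast
    have "y \<noteq> x" using y s(2) unfolding ax_def by auto
    have ty: "{t,y} \<in> ET" using y by (simp add: insert_commute)
    have "comp_minus ET {t,y} y \<subset> comp_minus ET {x,t} t"
      using tree_psub[OF T less.prems(1) ty \<open>y \<noteq> x\<close>] .
    hence lt: "card (comp_minus ET {t,y} y) < card (comp_minus ET {x,t} t)"
      using finC by (simp add: psubset_card_mono)
    have aty: "\<alpha> t y = sep_inv s" using edg[OF y(2,3)] y(1) by simp
    show ?thesis
      using less.hyps[OF lt ty \<open>y \<noteq> t\<close>[symmetric] Gr(1)] Gr(2,3) aty by simp
  qed
  define ch where "ch e = (if \<exists>s\<in>\<sigma>. s \<noteq> ax \<and> e \<subseteq> fst s then SOME s. s\<in>\<sigma> \<and> s \<noteq> ax \<and> e \<subseteq> fst s else ax)" for e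
  have ch1: "ch e \<in> \<sigma> \<and> e \<subseteq> fst (ch e)" if "e \<in> E" for e
  proof (cases "\<exists>s\<in>\<sigma>. s \<noteq> ax \<and> e \<subseteq> fst s")
    case True
    hence ex: "\<exists>s. s \<in> \<sigma> \<and> s \<noteq> ax \<and> e \<subseteq> fst s" by blast
    from someI_ex[OF ex] have "(SOME s. s \<in> \<sigma> \<and> s \<noteq> ax \<and> e \<subseteq> fst s) \<in> \<sigma> \<and> e \<subseteq> fst (SOME s. s \<in> \<sigma> \<and> s \<noteq> ax \<and> e \<subseteq> fst s)"
      by blast
    moreover have "ch e = (SOME s. s \<in> \<sigma> \<and> s \<noteq> ax \<and> e \<subseteq> fst s)" unfolding ch_def using True by (simp only: if_True)
    ultimately show ?thesis by simp
  next
    case False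
    then show ?thesis unfolding ch_def using cover[OF that] axs by auto
  qed
  define Gs where "Gs s = (if s = ax then {} else {e\<in>F. ch e = s})" for s
  define F0 where "F0 = {e\<in>F. ch e = ax}"
  have FE: "F \<subseteq> E" using less.prems(4) unfolding EB_def by auto
  have okG: "okset0 E k (Gs s)" for s
  proof (cases "Gs s = {}")
    case True then show ?thesis unfolding okset0_def by simp
  next
    case False
    then obtain e where e: "e \<in> F" "ch e = s" "s \<noteq> ax" unfolding Gs_def by (auto split: if_splits)
    have sS: "s \<in> \<sigma>" using ch1[of e] e FE by auto
    have "okset E k (Gs s)"
    proof (rule IHs[OF sS e(3) False])
      show "Gs s \<subseteq> EB E (fst s)" unfolding Gs_def EB_def using ch1 FE by auto
      show "E - Gs s \<subseteq> EB E (snd s)"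
      proof
        fix e' assume e': "e' \<in> E - Gs s"
        show "e' \<in> EB E (snd s)"
        proof (cases "e' \<in> F")
          case False
          hence "e' \<subseteq> A" using less.prems(5) e' unfolding EB_def A_def by auto
          moreover have "A \<subseteq> snd s" using starp[OF axs sS] e(3) unfolding A_def ax_def by auto
          ultimately show ?thesis using e' unfolding EB_def by auto
        next
          case True
          hence "ch e' \<noteq> s" using e' e(3) unfolding Gs_def by auto
          moreover have "ch e' \<in> \<sigma>" "e' \<subseteq> fst (ch e')" using ch1 e' by auto
          ultimately show ?thesis using starp[OF _ sS] e' unfolding EB_def by fastforce
        qed
      qed
    qed
    then show ?thesis unfolding okset0_def by simp
  qed
  have F0A: "F0 \<subseteq> EB E A" unfolding F0_def EB_def A_def ax_def using ch1 FE by fastforce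
  obtain a b where ab: "\<sigma> \<subseteq> {a,b,ax}" using \<sigma>3 axs by blast
  have FF: "F - F0 = Gs a \<union> Gs b"
  proof
    show "F - F0 \<subseteq> Gs a \<union> Gs b"
    proof
      fix e assume e: "e \<in> F - F0"
      hence "ch e \<noteq> ax" "ch e \<in> \<sigma>" using ch1 FE unfolding F0_def by auto
      then show "e \<in> Gs a \<union> Gs b" using ab e unfolding Gs_def by auto
    qed
    show "Gs a \<union> Gs b \<subseteq> F - F0" unfolding Gs_def F0_def by auto
  qed
  have finAB: "finite (A \<inter> B)" and cardAB: "card (A \<inter> B) < k"
  proof -
    have "ax \<in> vecS V E k" using vec axs by auto
    hence "is_sep V E ax" "card (A \<inter> B) < k" unfolding vecS_def A_def B_def ax_def by auto
    moreover have "finite V" using G unfolding simple_graph_def by simp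
    ultimately show "finite (A \<inter> B)" "card (A \<inter> B) < k" unfolding is_sep_def A_def B_def ax_def
      by (auto split: prod.splits intro: finite_subset)
  qed
  have bound: "card (bnd E T) < k" if "F - F0 \<subseteq> T" "T \<subseteq> F" for T
  proof -
    have "bnd E T \<subseteq> A \<inter> B"
    proof
      fix w assume "w \<in> bnd E T"
      then obtain e1 e2 where "w \<in> e1" "e1 \<in> T" "w \<in> e2" "e2 \<in> E - T" unfolding bnd_def by auto
      moreover have "e1 \<subseteq> B" using \<open>e1 \<in> T\<close> that less.prems(4) unfolding EB_def B_def by auto
      moreover have "e2 \<subseteq> A"
      proof (cases "e2 \<in> F")
        case True
        hence "e2 \<in> F0" using \<open>e2 \<in> E - T\<close> that by auto
        then show ?thesis using F0A unfolding EB_def by auto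
      next
        case False
        then show ?thesis using \<open>e2 \<in> E - T\<close> less.prems(5) unfolding EB_def A_def by auto
      qed
      ultimately show "w \<in> A \<inter> B" by auto
    qed
    then show ?thesis using finAB cardAB by (meson card_mono le_less_trans)
  qed
  have okP: "okset0 E k (F - F0)"
  proof (cases "a = b")
    case True then show ?thesis using FF okG by simp
  next
    case False
    have "okset0 E k (Gs a \<union> Gs b)"
    proof (rule okset_join[OF okG okG])
      show "Gs a \<inter> Gs b = {}" using False unfolding Gs_def by auto
      show "card (bnd E (Gs a \<union> Gs b)) < k" using bound FF by auto
    qed
    then show ?thesis using FF by simp
  qed
  have finE: "finite E" using simple_finite_E[OF G] .
  have "okset0 E k ((F - F0) \<union> F0)"
  proof (rule okset_grow[OF _ okP])
    have "F0 \<subseteq> E" using FE unfolding F0_def by auto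
    then show "finite F0" using finE by (rule finite_subset)
    show "(F - F0) \<inter> F0 = {}" by auto
    show "card (bnd E T) < k" if "F - F0 \<subseteq> T" "T \<subseteq> F - F0 \<union> F0" for T
    proof (rule bound)
      show "F - F0 \<subseteq> T" by fact
      show "T \<subseteq> F" using that(2) unfolding F0_def by auto
    qed
    show "finite e \<and> card e < k" if "e \<in> F0" for e using edge_small that FE unfolding F0_def by auto
  qed
  moreover have "(F - F0) \<union> F0 = F" unfolding F0_def by auto
  ultimately show ?case using less.prems(3) unfolding okset0_def by auto
qed

lemma okE:
  assumes "ET \<noteq> {}" "E \<noteq> {}"
  shows "okset E k E"
proof -
  obtain f where f: "f \<in> ET" using assms by auto
  then obtain x t where xt: "x \<noteq> t" "f = {x,t}" using T unfolding is_tree_def by blast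
  have e: "{x,t} \<in> ET" "{t,x} \<in> ET" using f xt by (auto simp: insert_commute)
  define A where "A = fst (\<alpha> x t)"
  define B where "B = snd (\<alpha> x t)"
  have inv: "\<alpha> t x = (B, A)" using edg[OF e(1) xt(1)] unfolding A_def B_def sep_inv_def by simp
  have sep: "is_sep V E (A,B)" using edg[OF e(1) xt(1)] unfolding vecS_def A_def B_def by simp
  define F where "F = EB E B"
  have c: "E - F \<subseteq> EB E A" unfolding F_def EB_def using sep_edge[OF G sep] by auto
  have o1: "okset0 E k F"
    using Q[OF e(1) xt(1), of F] c unfolding okset0_def F_def A_def B_def by auto
  have o2: "okset0 E k (E - F)"
    using Q[OF e(2) xt(1)[symmetric], of "E - F"] c inv unfolding okset0_def F_def EB_def by auto
  have "okset0 E k (F \<union> (E - F))"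
  proof (rule okset_join[OF o1 o2])
    show "F \<inter> (E - F) = {}" by auto
    have "F \<union> (E - F) = E" unfolding F_def EB_def by auto
    then show "card (bnd E (F \<union> (E - F))) < k" using k3 unfolding bnd_def by simp
  qed
  moreover have "F \<union> (E - F) = E" unfolding F_def EB_def by auto
  ultimately show ?thesis using assms(2) unfolding okset0_def by auto
qed

end



abbreviation enc :: "nat list \<Rightarrow> nat" where "enc \<equiv> list_encode"

lemma enc_eq[simp]: "enc p = enc q \<longleftrightarrow> p = q"
  by (metis list_encode_inverse)

definition aET :: "nat list set \<Rightarrow> nat set set" where
  "aET S = {{enc p, enc (p @ [c])} | p c. p @ [c] \<in> S}"

definition pclosed :: "nat list set \<Rightarrow> bool" where
  "pclosed S = (\<forall>p c. p @ [c] \<in> S \<longrightarrow> p \<in> S)"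

lemma pclosedD: "pclosed S \<Longrightarrow> p @ [c] \<in> S \<Longrightarrow> p \<in> S"
  unfolding pclosed_def by blast

lemma pclosed_butlast: "pclosed S \<Longrightarrow> p \<in> S \<Longrightarrow> p \<noteq> [] \<Longrightarrow> butlast p \<in> S"
  using pclosedD[of S "butlast p" "last p"] by (simp add: snoc_eq_iff_butlast)

lemma aET_edge: "p @ [c] \<in> S \<Longrightarrow> {enc p, enc (p @ [c])} \<in> aET S"
  unfolding aET_def by blast

lemma aET_cases:
  assumes "e \<in> aET S"
  obtains p c where "p @ [c] \<in> S" "e = {enc p, enc (p @ [c])}"
  using assms unfolding aET_def by blast

lemma root_reach:
  assumes "pclosed S" "q \<in> S"
  shows "(enc [], enc q) \<in> (adj_rel (aET S))\<^sup>*"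
  using assms(2)
proof (induction q rule: rev_induct)
  case Nil then show ?case by simp
next
  case (snoc c q)
  hence "q \<in> S" using pclosedD[OF assms(1)] by blast
  moreover have "(enc q, enc (q @ [c])) \<in> adj_rel (aET S)"
    using aET_edge[OF snoc.prems] by simp
  ultimately show ?case using snoc.IH by (simp add: rtrancl.rtrancl_into_rtrancl del: adj_rel_iff)
qed

lemma exists_max_idx:
  fixes f :: "nat \<Rightarrow> nat"
  assumes "0 < n"
  shows "\<exists>i<n. \<forall>j<n. f j \<le> f i"
  using assms
proof (induction n)
  case 0 then show ?case by simp
next
  case (Suc n)
  show ?case
  proof (cases "n = 0")
    case True then show ?thesis by auto
  next
    case False
    then obtain i where i: "i < n" "\<forall>j<n. f j \<le> f i" using Suc by auto
    show ?thesis
    proof (cases "f n \<le> f i")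
      case True then show ?thesis using i by (metis less_Suc_eq less_SucI)
    next
      case False then show ?thesis using i by (metis le_cases less_Suc_eq order_trans lessI)
    qed
  qed
qed

lemma mod_arith:
  fixes i L :: nat
  assumes "3 \<le> L" "i < L" "(i + 1) mod L = (i + (L - 1)) mod L"
  shows False
proof (cases "i + 1 < L")
  case True
  hence a: "(i + 1) mod L = i + 1" by simp
  show False
  proof (cases "i = 0")
    case True then show False using a assms by simp
  next
    case False
    hence "i + (L - 1) = (i - 1) + L" using assms by linarith
    hence "(i + (L - 1)) mod L = (i - 1) mod L" by (simp only: mod_add_self2)
    also have "\<dots> = i - 1" using assms by (intro mod_less) linarith
    finally have "(i + (L - 1)) mod L = i - 1" .
    then show False using a assms False by linarith
  qed
next
  case False
  hence "i + 1 = L" using assms by linarith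
  hence m1: "(i + 1) mod L = 0" by simp
  have "i + (L - 1) = (L - 2) + L" using \<open>i + 1 = L\<close> assms by linarith
  hence "(i + (L - 1)) mod L = (L - 2) mod L" by (simp only: mod_add_self2)
  also have "\<dots> = L - 2" using assms by (intro mod_less) linarith
  finally have "(i + (L - 1)) mod L = L - 2" .
  with m1 show False using assms by linarith
qed

lemma aET_parent:
  assumes "{x,y} \<in> aET S" "length (list_decode y) \<le> length (list_decode x)"
  shows "list_decode y = butlast (list_decode x) \<and> list_decode x \<noteq> []"
proof -
  obtain p c where pc: "p @ [c] \<in> S" "{x,y} = {enc p, enc (p @ [c])}" using assms(1) by (rule aET_cases)
  hence "(x = enc p \<and> y = enc (p @ [c])) \<or> (y = enc p \<and> x = enc (p @ [c]))" by (auto simp: doubleton_eq_iff)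
  then show ?thesis using assms(2) by auto
qed

lemma aET_acyclic:
  assumes "is_cycle (aET S) cs"
  shows False
proof -
  let ?L = "length cs"
  let ?f = "\<lambda>j. length (list_decode (cs ! j))"
  have L3: "3 \<le> ?L" and D: "distinct cs" and E: "\<forall>i<?L. {cs ! i, cs ! ((i + 1) mod ?L)} \<in> aET S"
    using assms unfolding is_cycle_def by auto
  have L0: "0 < ?L" using L3 by linarith
  hence "\<exists>i<?L. \<forall>j<?L. ?f j \<le> ?f i" by (rule exists_max_idx)
  then obtain i where i: "i < ?L" "\<forall>j<?L. ?f j \<le> ?f i" by blast
  define j1 where "j1 = (i + 1) mod ?L"
  define j0 where "j0 = (i + (?L - 1)) mod ?L"
  have j1L: "j1 < ?L" and j0L: "j0 < ?L" unfolding j1_def j0_def using L0 by auto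
  have e1: "{cs ! i, cs ! j1} \<in> aET S" using E i(1) unfolding j1_def by simp
  have "(j0 + 1) mod ?L = i"
  proof -
    have "(j0 + 1) mod ?L = (i + (?L - 1) + 1) mod ?L" unfolding j0_def by (simp add: mod_simps)
    also have "i + (?L - 1) + 1 = i + ?L" using L3 by simp
    finally show ?thesis using i(1) by simp
  qed
  hence e0: "{cs ! i, cs ! j0} \<in> aET S" using E j0L by (metis insert_commute)
  have p1: "list_decode (cs ! j1) = butlast (list_decode (cs ! i))"
    using aET_parent[OF e1] i(2) j1L by blast
  have p0: "list_decode (cs ! j0) = butlast (list_decode (cs ! i))"
    using aET_parent[OF e0] i(2) j0L by blast
  have "cs ! j1 = cs ! j0" using p1 p0 by (metis list_decode_inverse)
  hence "j1 = j0" using D j1L j0L by (simp add: nth_eq_iff_index_eq)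
  then show False using mod_arith[OF L3 i(1)] unfolding j1_def j0_def by simp
qed

lemma atree:
  assumes "finite S" "[] \<in> S" "pclosed S"
  shows "is_tree (enc ` S) (aET S)"
  unfolding is_tree_def
proof (intro conjI ballI)
  show "finite (enc ` S)" using assms by simp
  show "enc ` S \<noteq> {}" using assms by auto
  fix e assume "e \<in> aET S"
  then obtain p c where pc: "p @ [c] \<in> S" "e = {enc p, enc (p @ [c])}" by (rule aET_cases)
  have "enc p \<noteq> enc (p @ [c])" by simp
  then show "\<exists>x y. x \<noteq> y \<and> e = {x, y} \<and> x \<in> enc ` S \<and> y \<in> enc ` S"
    using pclosedD[OF assms(3) pc(1)] pc by blast
next
  fix x y assume "x \<in> enc ` S" "y \<in> enc ` S"
  then obtain p q where "x = enc p" "y = enc q" "p \<in> S" "q \<in> S" by auto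
  then show "(x, y) \<in> (adj_rel (aET S))\<^sup>*"
    using root_reach[OF assms(3)] rt_sym by (meson rtrancl_trans)
next
  show "\<nexists>cs. is_cycle (aET S) cs" using aET_acyclic by blast
qed

lemma nbr_char:
  assumes "pclosed S" "p \<in> S"
  shows "{z, enc p} \<in> aET S \<longleftrightarrow> (\<exists>c. p @ [c] \<in> S \<and> z = enc (p @ [c])) \<or> (p \<noteq> [] \<and> z = enc (butlast p))"
proof
  assume "{z, enc p} \<in> aET S"
  then obtain q c where qc: "q @ [c] \<in> S" "{z, enc p} = {enc q, enc (q @ [c])}" by (rule aET_cases)
  hence "(z = enc q \<and> p = q @ [c]) \<or> (z = enc (q @ [c]) \<and> p = q)" by (auto simp: doubleton_eq_iff)
  then show "(\<exists>c. p @ [c] \<in> S \<and> z = enc (p @ [c])) \<or> (p \<noteq> [] \<and> z = enc (butlast p))"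
    using qc(1) by auto
next
  assume "(\<exists>c. p @ [c] \<in> S \<and> z = enc (p @ [c])) \<or> (p \<noteq> [] \<and> z = enc (butlast p))"
  then show "{z, enc p} \<in> aET S"
  proof
    assume "\<exists>c. p @ [c] \<in> S \<and> z = enc (p @ [c])"
    then obtain c where "p @ [c] \<in> S" "z = enc (p @ [c])" by blast
    then show ?thesis using aET_edge[of p c S] by (simp add: insert_commute)
  next
    assume a: "p \<noteq> [] \<and> z = enc (butlast p)"
    hence "butlast p @ [last p] \<in> S" using assms(2) by simp
    from aET_edge[OF this] have "{enc (butlast p), enc p} \<in> aET S" using a by simp
    then show ?thesis using a by (simp add: insert_commute)
  qed
qed

definition children :: "nat list set \<Rightarrow> nat list \<Rightarrow> nat set" where
  "children S p = {c. p @ [c] \<in> S}"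

lemma children_finite: "finite S \<Longrightarrow> finite (children S p)"
proof -
  assume "finite S"
  have "children S p \<subseteq> last ` S" unfolding children_def by force
  then show ?thesis using \<open>finite S\<close> by (meson finite_imageI finite_subset)
qed

lemma aET_elem: "e \<in> aET S \<Longrightarrow> x \<in> e \<Longrightarrow> \<exists>z. e = {z, x}"
  by (erule aET_cases) auto

lemma tdeg_aET:
  assumes "finite S" "pclosed S" "p \<in> S"
  shows "tdeg (aET S) (enc p) = card (children S p) + (if p = [] then 0 else 1)"
proof -
  define Ch where "Ch = (\<lambda>c. {enc p, enc (p @ [c])}) ` children S p"
  define Pa where "Pa = (if p = [] then {} else {{enc (butlast p), enc p}})"
  have eq: "{e\<in>aET S. enc p \<in> e} = Ch \<union> Pa"
  proof
    show "{e\<in>aET S. enc p \<in> e} \<subseteq> Ch \<union> Pa"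
    proof
      fix e assume e: "e \<in> {e\<in>aET S. enc p \<in> e}"
      then obtain z where z: "e = {z, enc p}" using aET_elem by blast
      hence "{z, enc p} \<in> aET S" using e by simp
      then show "e \<in> Ch \<union> Pa" using nbr_char[OF assms(2,3)] z unfolding Ch_def Pa_def children_def
        by (auto simp: insert_commute)
    qed
    show "Ch \<union> Pa \<subseteq> {e\<in>aET S. enc p \<in> e}"
    proof
      fix e assume "e \<in> Ch \<union> Pa"
      then obtain z where "e = {z, enc p}" "(\<exists>c. p @ [c] \<in> S \<and> z = enc (p @ [c])) \<or> (p \<noteq> [] \<and> z = enc (butlast p))"
        unfolding Ch_def Pa_def children_def by (auto simp: insert_commute split: if_splits)
      then show "e \<in> {e\<in>aET S. enc p \<in> e}" using nbr_char[OF assms(2,3)] by auto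
    qed
  qed
  have inj: "inj_on (\<lambda>c. {enc p, enc (p @ [c])}) (children S p)"
    by (rule inj_onI) (auto simp: doubleton_eq_iff)
  have cCh: "card Ch = card (children S p)" unfolding Ch_def using card_image[OF inj] .
  have disj: "Ch \<inter> Pa = {}"
  proof -
    have "enc (butlast p) \<noteq> enc (p @ [c])" for c
    proof -
      have "length (butlast p) \<noteq> length (p @ [c])" by simp
      hence "butlast p \<noteq> p @ [c]" by (rule contrapos_nn) simp
      then show ?thesis by simp
    qed
    moreover have "enc (butlast p) \<noteq> enc p" if "p \<noteq> []"
    proof -
      have "length (butlast p) \<noteq> length p" using that by (cases p) auto
      hence "butlast p \<noteq> p" by (rule contrapos_nn) simp
      then show ?thesis by simp
    qed
    ultimately show ?thesis unfolding Ch_def Pa_def by (auto simp: doubleton_eq_iff)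
  qed
  have finCh: "finite Ch" unfolding Ch_def using children_finite[OF assms(1)] by simp
  have "tdeg (aET S) (enc p) = card (Ch \<union> Pa)" unfolding tdeg_def eq ..
  also have "\<dots> = card Ch + card Pa" using disj finCh by (simp add: card_Un_disjoint Pa_def)
  finally show ?thesis using cCh unfolding Pa_def by simp
qed

definition desc :: "nat list set \<Rightarrow> nat list \<Rightarrow> nat list set" where
  "desc S r = {q\<in>S. \<exists>xs. q = r @ xs}"

lemma comp_desc:
  assumes "pclosed S" "p @ [c] \<in> S"
  shows "comp_minus (aET S) {enc p, enc (p @ [c])} (enc (p @ [c])) = enc ` desc S (p @ [c])"
proof
  let ?f = "{enc p, enc (p @ [c])}"
  let ?r = "p @ [c]"
  show "enc ` desc S ?r \<subseteq> comp_minus (aET S) ?f (enc ?r)"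
  proof
    fix z assume "z \<in> enc ` desc S ?r"
    then obtain xs where xs: "?r @ xs \<in> S" "z = enc (?r @ xs)" unfolding desc_def by auto
    have "(enc ?r, enc (?r @ xs)) \<in> (adj_rel (aET S - {?f}))\<^sup>*"
      using xs(1)
    proof (induction xs rule: rev_induct)
      case Nil then show ?case by simp
    next
      case (snoc d xs)
      have "?r @ xs \<in> S" using pclosedD[OF assms(1), of "?r @ xs" d] snoc.prems by simp
      moreover have "{enc (?r @ xs), enc (?r @ xs @ [d])} \<in> aET S"
        using aET_edge[of "?r @ xs" d S] snoc.prems by simp
      moreover have "{enc (?r @ xs), enc (?r @ xs @ [d])} \<noteq> ?f"
      proof
        assume "{enc (?r @ xs), enc (?r @ xs @ [d])} = ?f"
        hence "?r @ xs @ [d] = p \<or> ?r @ xs @ [d] = p @ [c]" by (auto simp: doubleton_eq_iff)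
        moreover have "length (?r @ xs @ [d]) \<noteq> length p" "length (?r @ xs @ [d]) \<noteq> length (p @ [c])" by simp_all
        ultimately show False by auto
      qed
      ultimately have "(enc (?r @ xs), enc (?r @ xs @ [d])) \<in> adj_rel (aET S - {?f})" by simp
      then show ?case using snoc.IH \<open>?r @ xs \<in> S\<close> by (simp add: rtrancl.rtrancl_into_rtrancl del: adj_rel_iff)
    qed
    then show "z \<in> comp_minus (aET S) ?f (enc ?r)" unfolding comp_minus_def using xs by simp
  qed
  show "comp_minus (aET S) ?f (enc ?r) \<subseteq> enc ` desc S ?r"
  proof
    fix z assume "z \<in> comp_minus (aET S) ?f (enc ?r)"
    hence "(enc ?r, z) \<in> (adj_rel (aET S - {?f}))\<^sup>*" unfolding comp_minus_def by simp
    then show "z \<in> enc ` desc S ?r"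
    proof (induction rule: rtrancl_induct)
      case base then show ?case using assms(2) unfolding desc_def by force
    next
      case (step y z)
      obtain q where q: "q \<in> desc S ?r" "y = enc q" using step.IH by auto
      from step.hyps(2) have g: "{y,z} \<in> aET S" "{y,z} \<noteq> ?f" by auto
      obtain p' c' where pc: "p' @ [c'] \<in> S" "{y,z} = {enc p', enc (p' @ [c'])}" using g(1) by (rule aET_cases)
      hence "(q = p' \<and> z = enc (p' @ [c'])) \<or> (q = p' @ [c'] \<and> z = enc p')" using q(2) by (auto simp: doubleton_eq_iff)
      then show ?case
      proof
        assume a: "q = p' \<and> z = enc (p' @ [c'])"
        obtain xs where "q = ?r @ xs" using q(1) unfolding desc_def by auto
        hence "p' @ [c'] \<in> desc S ?r" using a pc(1) unfolding desc_def by auto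
        then show ?thesis using a by simp
      next
        assume a: "q = p' @ [c'] \<and> z = enc p'"
        obtain xs where xs: "q = ?r @ xs" using q(1) unfolding desc_def by auto
        show ?thesis
        proof (cases xs rule: rev_cases)
          case Nil
          hence "p' = p" "c' = c" using a xs by auto
          then show ?thesis using g(2) pc(2) by simp
        next
          case (snoc ys d)
          hence "p' = ?r @ ys" using a xs by simp
          moreover have "p' \<in> S" using pclosedD[OF assms(1) pc(1)] .
          ultimately have "p' \<in> desc S ?r" unfolding desc_def by blast
          then show ?thesis using a by simp
        qed
      qed
    qed
  qed
qed



fun addrs :: "'b bt \<Rightarrow> nat list set" where
  "addrs (Lf x) = {[]}"
| "addrs (Nd l r) = insert [] (Cons 0 ` addrs l \<union> Cons 1 ` addrs r)"

fun sub :: "'b bt \<Rightarrow> nat list \<Rightarrow> 'b bt" where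
  "sub t [] = t"
| "sub (Lf x) (c#p) = Lf x"
| "sub (Nd l r) (c#p) = (if c = 0 then sub l p else sub r p)"

lemma addrs_finite: "finite (addrs t)"
  by (induction t) auto

lemma addrs_root: "[] \<in> addrs t"
  by (cases t) auto

lemma addrs_pclosed_aux: "p @ [c] \<in> addrs t \<Longrightarrow> p \<in> addrs t"
proof (induction t arbitrary: p)
  case (Lf x) then show ?case by simp
next
  case (Nd l r)
  show ?case
  proof (cases p)
    case Nil then show ?thesis by simp
  next
    case (Cons a p')
    then show ?thesis using Nd by auto
  qed
qed

lemma addrs_pclosed: "pclosed (addrs t)"
  unfolding pclosed_def using addrs_pclosed_aux by blast

lemma addrs_append:
  "q \<in> addrs t \<Longrightarrow> (q @ xs \<in> addrs t \<longleftrightarrow> xs \<in> addrs (sub t q)) \<and> sub t (q @ xs) = sub (sub t q) xs"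
proof (induction t arbitrary: q)
  case (Lf x) then show ?case by simp
next
  case (Nd l r)
  show ?case
  proof (cases q)
    case Nil then show ?thesis by simp
  next
    case (Cons a q')
    then show ?thesis using Nd by auto
  qed
qed

lemma sub_subtrees: "p \<in> addrs t \<Longrightarrow> sub t p \<in> subtrees t"
proof (induction t arbitrary: p)
  case (Lf x) then show ?case by simp
next
  case (Nd l r) then show ?case by (cases p) auto
qed

lemma subtrees_trans: "s \<in> subtrees t \<Longrightarrow> subtrees s \<subseteq> subtrees t"
  by (induction t) auto

lemma subtrees_items: "s \<in> subtrees t \<Longrightarrow> items s \<subseteq> items t"
  by (induction t) auto

lemma subtrees_wf: "s \<in> subtrees t \<Longrightarrow> wfbt t \<Longrightarrow> wfbt s"
  by (induction t) auto

lemma items_addrs: "items s = {x. \<exists>q\<in>addrs s. sub s q = Lf x}"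
proof (induction s)
  case (Lf x) then show ?case by simp
next
  case (Nd l r)
  show ?case
  proof
    show "items (Nd l r) \<subseteq> {x. \<exists>q\<in>addrs (Nd l r). sub (Nd l r) q = Lf x}"
    proof
      fix x assume "x \<in> items (Nd l r)"
      hence "x \<in> items l \<or> x \<in> items r" by simp
      then show "x \<in> {x. \<exists>q\<in>addrs (Nd l r). sub (Nd l r) q = Lf x}"
      proof
        assume "x \<in> items l"
        then obtain q where "q \<in> addrs l" "sub l q = Lf x" using Nd.IH(1) by auto
        then show ?thesis by (intro CollectI bexI[of _ "0 # q"]) auto
      next
        assume "x \<in> items r"
        then obtain q where "q \<in> addrs r" "sub r q = Lf x" using Nd.IH(2) by auto
        then show ?thesis by (intro CollectI bexI[of _ "1 # q"]) auto
      qed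
    qed
    show "{x. \<exists>q\<in>addrs (Nd l r). sub (Nd l r) q = Lf x} \<subseteq> items (Nd l r)"
      using Nd.IH by force
  qed
qed

lemma leaf_unique:
  "wfbt t \<Longrightarrow> p \<in> addrs t \<Longrightarrow> q \<in> addrs t \<Longrightarrow> sub t p = Lf x \<Longrightarrow> sub t q = Lf x \<Longrightarrow> p = q"
proof (induction t arbitrary: p q)
  case (Lf y) then show ?case by simp
next
  case (Nd l r)
  have pne: "p \<noteq> []" and qne: "q \<noteq> []" using Nd.prems by auto
  then obtain a p' b q' where pq: "p = a # p'" "q = b # q'" by (meson neq_Nil_conv)
  have ab: "(a = 0 \<and> p' \<in> addrs l \<or> a = 1 \<and> p' \<in> addrs r)" "(b = 0 \<and> q' \<in> addrs l \<or> b = 1 \<and> q' \<in> addrs r)"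
    using Nd.prems(2,3) pq by auto
  have il: "x \<in> items l" if "p'' \<in> addrs l" "sub l p'' = Lf x" for p''
    using that items_addrs[of l] by auto
  have ir: "x \<in> items r" if "p'' \<in> addrs r" "sub r p'' = Lf x" for p''
    using that items_addrs[of r] by auto
  from ab show ?case
  proof (elim disjE conjE)
    assume "a = 0" "p' \<in> addrs l" "b = 0" "q' \<in> addrs l"
    then show ?thesis using Nd pq by auto
  next
    assume "a = 0" "p' \<in> addrs l" "b = 1" "q' \<in> addrs r"
    then show ?thesis using Nd.prems pq il ir by auto
  next
    assume "a = 1" "p' \<in> addrs r" "b = 0" "q' \<in> addrs l"
    then show ?thesis using Nd.prems pq il ir by auto
  next
    assume "a = 1" "p' \<in> addrs r" "b = 1" "q' \<in> addrs r"
    then show ?thesis using Nd pq by auto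
  qed
qed

lemma child_addr:
  assumes "p \<in> addrs t"
  shows "p @ [c] \<in> addrs t \<longleftrightarrow> (\<exists>l r. sub t p = Nd l r) \<and> (c = 0 \<or> c = 1)"
  using addrs_append[OF assms, of "[c]"] by (cases "sub t p") (auto simp: image_iff addrs_root)

lemma child_sub:
  assumes "p \<in> addrs t" "sub t p = Nd l r"
  shows "sub t (p @ [0]) = l" "sub t (p @ [1]) = r"
  using addrs_append[OF assms(1), of "[0]"] addrs_append[OF assms(1), of "[1]"] assms(2) by auto



definition isLf :: "'b bt \<Rightarrow> bool" where "isLf s = (\<exists>x. s = Lf x)"

fun leafv :: "'b bt \<Rightarrow> 'b" where "leafv (Lf x) = x" | "leafv (Nd l r) = undefined"

lemma vecS_inv:
  assumes "s \<in> vecS V E k" shows "sep_inv s \<in> vecS V E k"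
proof -
  obtain A B where s: "s = (A,B)" by (cases s)
  have 1: "A \<union> B = V" and 2: "\<not> (\<exists>e\<in>E. \<exists>x y. e = {x,y} \<and> x \<in> A - B \<and> y \<in> B - A)" and 3: "card (A \<inter> B) < k"
    using assms s unfolding vecS_def is_sep_def by auto
  have "\<not> (\<exists>e\<in>E. \<exists>x y. e = {x,y} \<and> x \<in> B - A \<and> y \<in> A - B)"
  proof
    assume "\<exists>e\<in>E. \<exists>x y. e = {x,y} \<and> x \<in> B - A \<and> y \<in> A - B"
    then obtain e x y where "e \<in> E" "e = {y,x}" "x \<in> B - A" "y \<in> A - B" by (auto simp: insert_commute)
    with 2 show False by blast
  qed
  moreover have "B \<union> A = V" "card (B \<inter> A) < k" using 1 3 by (auto simp: Int_commute Un_commute)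
  ultimately show ?thesis unfolding vecS_def is_sep_def sep_inv_def s by simp
qed

lemma Fstar_I:
  assumes "\<sigma> = {s1,s2,s3}" "\<sigma> \<subseteq> vecS V E k"
    and "\<And>r s. r \<in> \<sigma> \<Longrightarrow> s \<in> \<sigma> \<Longrightarrow> r \<noteq> s \<Longrightarrow> fst r \<subseteq> snd s"
    and "fst s1 \<union> fst s2 \<union> fst s3 = V"
    and "\<And>e. e \<in> E \<Longrightarrow> e \<subseteq> fst s1 \<or> e \<subseteq> fst s2 \<or> e \<subseteq> fst s3"
  shows "\<sigma> \<in> Fstar V E k"
proof -
  have "is_star \<sigma>" unfolding is_star_def
  proof (intro conjI ballI impI)
    show "\<sigma> \<noteq> {}" using assms(1) by simp
    fix r s assume "r \<in> \<sigma>" "s \<in> \<sigma>" "r \<noteq> s"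
    then show "sep_le r (sep_inv s)" unfolding sep_le_def using assms(3)[of r s] assms(3)[of s r] by simp
  qed
  have "\<forall>e\<in>E. e \<subseteq> fst s1 \<or> e \<subseteq> fst s2 \<or> e \<subseteq> fst s3" using assms(5) by blast
  then have "\<sigma> = {s1, s2, s3} \<and> \<sigma> \<subseteq> vecS V E k \<and> is_star \<sigma> \<and>
      fst s1 \<union> fst s2 \<union> fst s3 = V \<and> (\<forall>e\<in>E. e \<subseteq> fst s1 \<or> e \<subseteq> fst s2 \<or> e \<subseteq> fst s3)"
    using assms(1,2,4) \<open>is_star \<sigma>\<close> by simp
  then show ?thesis unfolding Fstar_def by blast
qed

locale skc =
  fixes V :: "'a set" and E :: "'a set set" and k :: nat and t :: "'a set bt"
  assumes G: "simple_graph V E" and k3: "k \<ge> 3" and wf: "wfbt t"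
    and cov: "\<Union>(items t) = V" and EU: "E \<subseteq> items t"
    and small: "\<And>X. X \<in> items t \<Longrightarrow> X \<subseteq> V \<and> finite X \<and> card X < k"
    and bd: "\<And>s. s \<in> subtrees t \<Longrightarrow> card (bnd (items t) (items s)) < k"
begin

abbreviation "U \<equiv> items t"

definition S :: "nat list set" where
  "S = addrs t \<union> {p @ [0] | p. p \<in> addrs t \<and> isLf (sub t p)}"

definition sepc :: "nat list \<Rightarrow> 'a set \<times> 'a set" where
  "sepc q = (if q \<in> addrs t then (\<Union>(items (sub t q)), \<Union>(U - items (sub t q)))
             else (leafv (sub t (butlast q)), V))"

definition \<alpha>a :: "nat list \<Rightarrow> nat list \<Rightarrow> 'a set \<times> 'a set" where
  "\<alpha>a p q = (if p \<noteq> [] \<and> butlast p = q then sepc p else sep_inv (sepc q))"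

definition \<alpha> :: "nat \<Rightarrow> nat \<Rightarrow> 'a set \<times> 'a set" where
  "\<alpha> x y = \<alpha>a (list_decode x) (list_decode y)"

lemma S_finite: "finite S"
proof -
  have "{p @ [0] | p. p \<in> addrs t \<and> isLf (sub t p)} \<subseteq> (\<lambda>p. p @ [0]) ` addrs t" by auto
  then show ?thesis unfolding S_def using addrs_finite by (meson finite_Un finite_imageI finite_subset)
qed

lemma S_root: "[] \<in> S" unfolding S_def using addrs_root by simp

lemma S_pclosed: "pclosed S"
  unfolding pclosed_def S_def using addrs_pclosed_aux by auto

lemma Ttree: "is_tree (enc ` S) (aET S)"
  using atree[OF S_finite S_root S_pclosed] .

lemma pend_iff: "p @ [c] \<in> S \<and> p @ [c] \<notin> addrs t \<longleftrightarrow> p \<in> addrs t \<and> isLf (sub t p) \<and> c = 0"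
proof -
  have "p \<in> addrs t \<Longrightarrow> isLf (sub t p) \<Longrightarrow> p @ [0] \<notin> addrs t"
    using child_addr unfolding isLf_def by force
  then show ?thesis unfolding S_def by auto
qed

lemma U_sub: "p \<in> addrs t \<Longrightarrow> items (sub t p) \<subseteq> U"
  using sub_subtrees subtrees_items by blast

lemma sepc_vec:
  assumes "q \<in> S" "q \<noteq> []"
  shows "sepc q \<in> vecS V E k"
proof (cases "q \<in> addrs t")
  case True
  define P where "P = items (sub t q)"
  have PU: "P \<subseteq> U" using U_sub[OF True] unfolding P_def .
  have sc: "sepc q = (\<Union>P, \<Union>(U - P))" using True unfolding sepc_def P_def by simp
  have "\<Union>P \<union> \<Union>(U - P) = V" using PU cov by blast
  moreover have "\<not> (\<exists>e\<in>E. \<exists>x y. e = {x, y} \<and> x \<in> \<Union>P - \<Union>(U - P) \<and> y \<in> \<Union>(U - P) - \<Union>P)"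
  proof
    assume "\<exists>e\<in>E. \<exists>x y. e = {x, y} \<and> x \<in> \<Union>P - \<Union>(U - P) \<and> y \<in> \<Union>(U - P) - \<Union>P"
    then obtain e x y where e: "e \<in> E" "e = {x,y}" "x \<in> \<Union>P - \<Union>(U - P)" "y \<in> \<Union>(U - P) - \<Union>P" by blast
    have "e \<in> U" using e(1) EU by auto
    show False
    proof (cases "e \<in> P")
      case True then show False using e by auto
    next
      case False then show False using e \<open>e \<in> U\<close> by auto
    qed
  qed
  moreover have "card (\<Union>P \<inter> \<Union>(U - P)) < k"
    using bd[OF sub_subtrees[OF True]] unfolding bnd_def P_def .
  ultimately have "is_sep V E (\<Union>P, \<Union>(U - P))" unfolding is_sep_def prod.case by (intro conjI)
  then show ?thesis unfolding vecS_def sc using \<open>card (\<Union>P \<inter> \<Union>(U - P)) < k\<close> by simp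
next
  case False
  then obtain p where p: "q = p @ [0]" "p \<in> addrs t" "isLf (sub t p)" using assms(1) unfolding S_def by auto
  then obtain X where X: "sub t p = Lf X" unfolding isLf_def by auto
  have "X \<in> U" using U_sub[OF p(2)] X by auto
  hence XV: "X \<subseteq> V" "finite X" "card X < k" using small by auto
  have sc: "sepc q = (X, V)" using False p X unfolding sepc_def by simp
  have "card (X \<inter> V) < k" using XV by (simp add: Int_absorb2)
  then show ?thesis unfolding vecS_def is_sep_def sc using XV by auto
qed

lemma edge_cond:
  assumes "{x,y} \<in> aET S" "x \<noteq> y"
  shows "\<alpha> x y \<in> vecS V E k \<and> \<alpha> y x = sep_inv (\<alpha> x y)"
proof -
  obtain q c where qc: "q @ [c] \<in> S" "{x,y} = {enc q, enc (q @ [c])}" using assms(1) by (rule aET_cases)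
  have v: "sepc (q @ [c]) \<in> vecS V E k" using sepc_vec[OF qc(1)] by simp
  have a1: "\<alpha>a (q @ [c]) q = sepc (q @ [c])" unfolding \<alpha>a_def by simp
  have a2: "\<alpha>a q (q @ [c]) = sep_inv (sepc (q @ [c]))"
  proof -
    have "\<not> (q \<noteq> [] \<and> butlast q = q @ [c])"
    proof
      assume "q \<noteq> [] \<and> butlast q = q @ [c]"
      hence "length (butlast q) = length (q @ [c])" by simp
      then show False by simp
    qed
    then show ?thesis unfolding \<alpha>a_def by (rule if_not_P)
  qed
  have ii: "sep_inv (sep_inv s) = s" for s :: "'a set \<times> 'a set" by (simp add: sep_inv_def)
  from qc(2) have "(x = enc q \<and> y = enc (q @ [c])) \<or> (x = enc (q @ [c]) \<and> y = enc q)" by (auto simp: doubleton_eq_iff)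
  then show ?thesis
  proof
    assume "x = enc q \<and> y = enc (q @ [c])"
    then show ?thesis unfolding \<alpha>_def using a1 a2 v vecS_inv ii by simp
  next
    assume "x = enc (q @ [c]) \<and> y = enc q"
    then show ?thesis unfolding \<alpha>_def using a1 a2 v vecS_inv by simp
  qed
qed

lemma star_set:
  assumes "p \<in> S"
  shows "{\<alpha> z (enc p) | z. {z, enc p} \<in> aET S \<and> z \<noteq> enc p} =
         (\<lambda>c. sepc (p @ [c])) ` children S p \<union> (if p = [] then {} else {sep_inv (sepc p)})"
proof -
  have a1: "\<alpha>a (p @ [c]) p = sepc (p @ [c])" for c unfolding \<alpha>a_def by simp
  have a2: "\<alpha>a (butlast p) p = sep_inv (sepc p)" if "p \<noteq> []"
  proof -
    have "\<not> (butlast p \<noteq> [] \<and> butlast (butlast p) = p)"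
    proof
      assume "butlast p \<noteq> [] \<and> butlast (butlast p) = p"
      hence "length (butlast (butlast p)) = length p" by simp
      moreover have "length (butlast (butlast p)) = length p - 1 - 1" by (simp only: length_butlast)
      moreover have "length p > 0" using that by (cases p) auto
      ultimately show False by linarith
    qed
    then show ?thesis unfolding \<alpha>a_def by (rule if_not_P)
  qed
  have ne1: "enc (p @ [c]) \<noteq> enc p" for c by simp
  have ne2: "enc (butlast p) \<noteq> enc p" if "p \<noteq> []"
  proof -
    have "length (butlast p) \<noteq> length p" using that by (cases p) auto
    hence "butlast p \<noteq> p" by (rule contrapos_nn) simp
    then show ?thesis by simp
  qed
  show ?thesis
  proof
    show "{\<alpha> z (enc p) | z. {z, enc p} \<in> aET S \<and> z \<noteq> enc p} \<subseteq>
         (\<lambda>c. sepc (p @ [c])) ` children S p \<union> (if p = [] then {} else {sep_inv (sepc p)})"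
    proof
      fix s assume "s \<in> {\<alpha> z (enc p) | z. {z, enc p} \<in> aET S \<and> z \<noteq> enc p}"
      then obtain z where z: "s = \<alpha> z (enc p)" "{z, enc p} \<in> aET S" by blast
      from z(2) nbr_char[OF S_pclosed assms] have
        "(\<exists>c. p @ [c] \<in> S \<and> z = enc (p @ [c])) \<or> (p \<noteq> [] \<and> z = enc (butlast p))" by simp
      then show "s \<in> (\<lambda>c. sepc (p @ [c])) ` children S p \<union> (if p = [] then {} else {sep_inv (sepc p)})"
      proof
        assume "\<exists>c. p @ [c] \<in> S \<and> z = enc (p @ [c])"
        then obtain c where "p @ [c] \<in> S" "z = enc (p @ [c])" by blast
        then show ?thesis using z(1) a1 unfolding \<alpha>_def children_def by auto
      next
        assume "p \<noteq> [] \<and> z = enc (butlast p)"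
        then show ?thesis using z(1) a2 unfolding \<alpha>_def by auto
      qed
    qed
    show "(\<lambda>c. sepc (p @ [c])) ` children S p \<union> (if p = [] then {} else {sep_inv (sepc p)}) \<subseteq>
          {\<alpha> z (enc p) | z. {z, enc p} \<in> aET S \<and> z \<noteq> enc p}"
    proof
      fix s assume s: "s \<in> (\<lambda>c. sepc (p @ [c])) ` children S p \<union> (if p = [] then {} else {sep_inv (sepc p)})"
      show "s \<in> {\<alpha> z (enc p) | z. {z, enc p} \<in> aET S \<and> z \<noteq> enc p}"
      proof (cases "s \<in> (\<lambda>c. sepc (p @ [c])) ` children S p")
        case True
        then obtain c where c: "p @ [c] \<in> S" "s = sepc (p @ [c])" unfolding children_def by auto
        have "{enc (p @ [c]), enc p} \<in> aET S" using nbr_char[OF S_pclosed assms] c(1) by blast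
        moreover have "s = \<alpha> (enc (p @ [c])) (enc p)" using c(2) a1 unfolding \<alpha>_def by simp
        ultimately show ?thesis using ne1 by blast
      next
        case False
        hence pn: "p \<noteq> []" "s = sep_inv (sepc p)" using s by (auto split: if_splits)
        have "{enc (butlast p), enc p} \<in> aET S" using nbr_char[OF S_pclosed assms] pn(1) by blast
        moreover have "s = \<alpha> (enc (butlast p)) (enc p)" using pn a2 unfolding \<alpha>_def by simp
        ultimately show ?thesis using ne2[OF pn(1)] by blast
      qed
    qed
  qed
qed


lemma UV: "\<Union>U = V" using cov .

lemma addrs_S: "addrs t \<subseteq> S" unfolding S_def by blast

lemma star_ok:
  assumes pS: "p \<in> S"
  shows "{\<alpha> z (enc p) | z. {z, enc p} \<in> aET S \<and> z \<noteq> enc p} \<in> Fstar V E k"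
proof (cases "p \<in> addrs t")
  case pa: True
  show ?thesis
  proof (cases "sub t p")
    case (Nd l r)
    have ch: "children S p = {0,1}"
    proof -
      have "p @ [c] \<in> S \<longleftrightarrow> c = 0 \<or> c = 1" for c
      proof -
        have "\<not> isLf (sub t p)" using Nd unfolding isLf_def by simp
        hence "p @ [c] \<in> S \<longleftrightarrow> p @ [c] \<in> addrs t" using pend_iff[of p c] addrs_S by blast
        also have "\<dots> \<longleftrightarrow> c = 0 \<or> c = 1" using child_addr[OF pa] Nd by simp
        finally show ?thesis .
      qed
      then show ?thesis unfolding children_def by auto
    qed
    have p0: "p @ [0] \<in> addrs t" and p1: "p @ [1] \<in> addrs t" using child_addr[OF pa] Nd by auto
    have s0: "sub t (p @ [0]) = l" and s1: "sub t (p @ [1]) = r" using child_sub[OF pa Nd] by auto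
    define Pl where "Pl = items l"
    define Pr where "Pr = items r"
    define P where "P = items (sub t p)"
    have PP: "P = Pl \<union> Pr" unfolding P_def Pl_def Pr_def Nd by simp
    have "wfbt (sub t p)" using subtrees_wf[OF sub_subtrees[OF pa] wf] .
    hence dj: "Pl \<inter> Pr = {}" unfolding Pl_def Pr_def Nd by simp
    have PU: "P \<subseteq> U" using U_sub[OF pa] unfolding P_def .
    define a0 where "a0 = sepc (p @ [0])"
    define a1 where "a1 = sepc (p @ [1])"
    have a0: "a0 = (\<Union>Pl, \<Union>(U - Pl))" unfolding a0_def sepc_def Pl_def using p0 s0 by simp
    have a1: "a1 = (\<Union>Pr, \<Union>(U - Pr))" unfolding a1_def sepc_def Pr_def using p1 s1 by simp
    have v0: "a0 \<in> vecS V E k" unfolding a0_def using sepc_vec p0 unfolding S_def by simp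
    have v1: "a1 \<in> vecS V E k" unfolding a1_def using sepc_vec p1 unfolding S_def by simp
    have i01: "fst a0 \<subseteq> snd a1" "fst a1 \<subseteq> snd a0" using a0 a1 dj PP PU by auto
    have Eedge: "e \<in> Pl \<or> e \<in> Pr \<or> e \<in> U - P" if "e \<in> E" for e using that EU PP by auto
    show ?thesis
    proof (cases "p = []")
      case True
      have PUe: "P = U" unfolding P_def True by simp
      have sig: "{\<alpha> z (enc p) | z. {z, enc p} \<in> aET S \<and> z \<noteq> enc p} = {a0, a1, a1}"
        using star_set[OF pS] ch True unfolding a0_def a1_def by simp
      show ?thesis unfolding sig
      proof (rule Fstar_I)
        show "{a0, a1, a1} \<subseteq> vecS V E k" using v0 v1 by simp
        show "fst r \<subseteq> snd s" if "r \<in> {a0, a1, a1}" "s \<in> {a0, a1, a1}" "r \<noteq> s" for r s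
          using that i01 by auto
        show "fst a0 \<union> fst a1 \<union> fst a1 = V" using a0 a1 PP PUe UV by auto
        show "e \<subseteq> fst a0 \<or> e \<subseteq> fst a1 \<or> e \<subseteq> fst a1" if "e \<in> E" for e
          using Eedge[OF that] a0 a1 PUe by auto
      qed (rule refl)
    next
      case False
      define pa' where "pa' = sep_inv (sepc p)"
      have pa'e: "pa' = (\<Union>(U - P), \<Union>P)" unfolding pa'_def sepc_def P_def sep_inv_def using pa by simp
      have vp: "pa' \<in> vecS V E k" unfolding pa'_def using sepc_vec[OF pS False] vecS_inv by blast
      have sig: "{\<alpha> z (enc p) | z. {z, enc p} \<in> aET S \<and> z \<noteq> enc p} = {a0, a1, pa'}"
        using star_set[OF pS] ch False unfolding a0_def a1_def pa'_def by auto
      show ?thesis unfolding sig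
      proof (rule Fstar_I)
        show "{a0, a1, pa'} \<subseteq> vecS V E k" using v0 v1 vp by simp
        have "fst a0 \<subseteq> snd pa'" "fst a1 \<subseteq> snd pa'" "fst pa' \<subseteq> snd a0" "fst pa' \<subseteq> snd a1"
          using a0 a1 pa'e PP by auto
        then show "fst r \<subseteq> snd s" if "r \<in> {a0, a1, pa'}" "s \<in> {a0, a1, pa'}" "r \<noteq> s" for r s
          using that i01 by auto
        show "fst a0 \<union> fst a1 \<union> fst pa' = V" using a0 a1 pa'e PP PU UV by auto
        show "e \<subseteq> fst a0 \<or> e \<subseteq> fst a1 \<or> e \<subseteq> fst pa'" if "e \<in> E" for e
          using Eedge[OF that] a0 a1 pa'e by auto
      qed (rule refl)
    qed
  next
    case (Lf X)
    have ch: "children S p = {0}"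
    proof -
      have "p @ [c] \<in> S \<longleftrightarrow> c = 0" for c
      proof -
        have "p @ [c] \<notin> addrs t" using child_addr[OF pa] Lf by simp
        moreover have "isLf (sub t p)" using Lf unfolding isLf_def by simp
        ultimately show ?thesis using pend_iff[of p c] pa by blast
      qed
      then show ?thesis unfolding children_def by auto
    qed
    have XU: "X \<in> U" using U_sub[OF pa] Lf by auto
    have p0S: "p @ [0] \<in> S" using ch unfolding children_def by auto
    have p0n: "p @ [0] \<notin> addrs t" using child_addr[OF pa] Lf by simp
    define b0 where "b0 = sepc (p @ [0])"
    have b0: "b0 = (X, V)" unfolding b0_def sepc_def using p0n Lf by simp
    have vb: "b0 \<in> vecS V E k" unfolding b0_def using sepc_vec[OF p0S] by simp
    show ?thesis
    proof (cases "p = []")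
      case True
      have "U = {X}" using Lf True by simp
      hence XV: "X = V" using UV by simp
      have sig: "{\<alpha> z (enc p) | z. {z, enc p} \<in> aET S \<and> z \<noteq> enc p} = {b0, b0, b0}"
        using star_set[OF pS] ch True unfolding b0_def by simp
      show ?thesis unfolding sig
      proof (rule Fstar_I)
        show "{b0, b0, b0} \<subseteq> vecS V E k" using vb by simp
        show "fst r \<subseteq> snd s" if "r \<in> {b0, b0, b0}" "s \<in> {b0, b0, b0}" "r \<noteq> s" for r s
          using that by auto
        show "fst b0 \<union> fst b0 \<union> fst b0 = V" using b0 XV by simp
        show "e \<subseteq> fst b0 \<or> e \<subseteq> fst b0 \<or> e \<subseteq> fst b0" if "e \<in> E" for e
          using that b0 XV simple_edge_sub[OF G] by auto
      qed (rule refl)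
    next
      case False
      define pa' where "pa' = sep_inv (sepc p)"
      have pa'e: "pa' = (\<Union>(U - {X}), X)" unfolding pa'_def sepc_def sep_inv_def using pa Lf by simp
      have vp: "pa' \<in> vecS V E k" unfolding pa'_def using sepc_vec[OF pS False] vecS_inv by blast
      have sig: "{\<alpha> z (enc p) | z. {z, enc p} \<in> aET S \<and> z \<noteq> enc p} = {b0, pa', pa'}"
        using star_set[OF pS] ch False unfolding b0_def pa'_def by auto
      show ?thesis unfolding sig
      proof (rule Fstar_I)
        show "{b0, pa', pa'} \<subseteq> vecS V E k" using vb vp by simp
        have "fst b0 \<subseteq> snd pa'" "fst pa' \<subseteq> snd b0" using b0 pa'e UV by auto
        then show "fst r \<subseteq> snd s" if "r \<in> {b0, pa', pa'}" "s \<in> {b0, pa', pa'}" "r \<noteq> s" for r s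
          using that by auto
        show "fst b0 \<union> fst pa' \<union> fst pa' = V" using b0 pa'e XU UV by auto
        show "e \<subseteq> fst b0 \<or> e \<subseteq> fst pa' \<or> e \<subseteq> fst pa'" if "e \<in> E" for e
        proof -
          have "e \<in> U" using that EU by auto
          then show ?thesis using b0 pa'e by (cases "e = X") auto
        qed
      qed (rule refl)
    qed
  qed
next
  case False
  then obtain p' where p': "p = p' @ [0]" "p' \<in> addrs t" "isLf (sub t p')" using pS unfolding S_def by auto
  then obtain X where X: "sub t p' = Lf X" unfolding isLf_def by auto
  have ch: "children S p = {}"
  proof -
    have "p @ [c] \<notin> S" for c
    proof
      assume "p @ [c] \<in> S"
      then show False unfolding S_def using False addrs_pclosed_aux by auto
    qed
    then show ?thesis unfolding children_def by auto
  qed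
  have pn: "p \<noteq> []" using p' by simp
  define q where "q = sep_inv (sepc p)"
  have qe: "q = (V, X)" unfolding q_def sepc_def sep_inv_def using False p' X by simp
  have vq: "q \<in> vecS V E k" unfolding q_def using sepc_vec[OF pS pn] vecS_inv by blast
  have sig: "{\<alpha> z (enc p) | z. {z, enc p} \<in> aET S \<and> z \<noteq> enc p} = {q, q, q}"
    using star_set[OF pS] ch pn unfolding q_def by simp
  show ?thesis unfolding sig
  proof (rule Fstar_I)
    show "{q, q, q} \<subseteq> vecS V E k" using vq by simp
    show "fst r \<subseteq> snd s" if "r \<in> {q, q, q}" "s \<in> {q, q, q}" "r \<noteq> s" for r s using that by auto
    show "fst q \<union> fst q \<union> fst q = V" using qe by simp
    show "e \<subseteq> fst q \<or> e \<subseteq> fst q \<or> e \<subseteq> fst q" if "e \<in> E" for e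
      using that qe simple_edge_sub[OF G] by auto
  qed (rule refl)
qed

theorem has_tree: "has_Sk_tree_over_Fstar V E k"
proof -
  have "[0] \<in> S"
  proof (cases t)
    case (Lf X)
    then show ?thesis unfolding S_def isLf_def using addrs_root by force
  next
    case (Nd l r)
    then show ?thesis unfolding S_def using addrs_root by force
  qed
  then have "{enc [], enc ([] @ [0])} \<in> aET S" by (intro aET_edge) simp
  then have 2: "aET S \<noteq> {}" by blast
  have 3: "\<forall>x y. {x, y} \<in> aET S \<and> x \<noteq> y \<longrightarrow> \<alpha> x y \<in> vecS V E k \<and> \<alpha> y x = sep_inv (\<alpha> x y)"
    using edge_cond by blast
  have 4: "\<forall>n\<in>enc ` S. {\<alpha> x n | x. {x, n} \<in> aET S \<and> x \<noteq> n} \<in> Fstar V E k"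
    using star_ok by blast
  show ?thesis unfolding has_Sk_tree_over_Fstar_def using Ttree 2 3 4 by blast
qed

end



lemma addrs_hd: "p \<in> addrs t \<Longrightarrow> p \<noteq> [] \<Longrightarrow> hd p = 0 \<or> hd p = 1"
  by (cases t) auto

locale bdc =
  fixes V :: "'a set" and E :: "'a set set" and l r :: "'a set bt"
  assumes wf: "wfbt (Nd l r)" and itE: "items (Nd l r) = E" and finE: "finite (\<Union>E)"
begin

definition S :: "nat list set" where "S = addrs l \<union> Cons 2 ` addrs r"

definition bs :: "nat list \<Rightarrow> 'a set bt" where
  "bs p = (if p \<noteq> [] \<and> hd p = 2 then sub r (tl p) else sub l p)"

lemma S_finite: "finite S" unfolding S_def by (simp add: addrs_finite)
lemma S_root: "[] \<in> S" unfolding S_def by (simp add: addrs_root)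
lemma S_pclosed: "pclosed S"
  unfolding pclosed_def S_def
proof (intro allI impI)
  fix p c assume a: "p @ [c] \<in> addrs l \<union> Cons 2 ` addrs r"
  show "p \<in> addrs l \<union> Cons 2 ` addrs r"
  proof (cases "p @ [c] \<in> addrs l")
    case True then show ?thesis using addrs_pclosed_aux by blast
  next
    case False
    then obtain q where q: "q \<in> addrs r" "p @ [c] = 2 # q" using a by auto
    show ?thesis
    proof (cases p)
      case Nil then show ?thesis by (simp add: addrs_root)
    next
      case (Cons a p')
      hence "q = p' @ [c]" "a = 2" using q by auto
      then show ?thesis using Cons q(1) addrs_pclosed_aux by blast
    qed
  qed
qed

lemma Ttree: "is_tree (enc ` S) (aET S)" using atree[OF S_finite S_root S_pclosed] .

lemma lr_wf: "wfbt l" "wfbt r" "items l \<inter> items r = {}" using wf by auto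

lemma ext:
  assumes "q \<in> S" "q \<noteq> []"
  shows "(q @ xs \<in> S \<longleftrightarrow> xs \<in> addrs (bs q)) \<and> (q @ xs \<in> S \<longrightarrow> bs (q @ xs) = sub (bs q) xs)"
proof (cases "q \<in> addrs l")
  case True
  have h: "hd q \<noteq> 2" using addrs_hd[OF True assms(2)] by auto
  have "q @ xs \<notin> Cons 2 ` addrs r" using h assms(2) by (cases q) auto
  moreover have "bs q = sub l q" "bs (q @ xs) = sub l (q @ xs)" unfolding bs_def using h assms(2) by auto
  ultimately show ?thesis using addrs_append[OF True, of xs] unfolding S_def by auto
next
  case False
  then obtain q' where q': "q = 2 # q'" "q' \<in> addrs r" using assms(1) unfolding S_def by auto
  have "q @ xs \<notin> addrs l"
  proof
    assume "q @ xs \<in> addrs l"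
    with addrs_hd[OF this] q' show False by simp
  qed
  moreover have "bs q = sub r q'" "bs (q @ xs) = sub r (q' @ xs)" unfolding bs_def using q' by auto
  moreover have "q @ xs \<in> Cons 2 ` addrs r \<longleftrightarrow> q' @ xs \<in> addrs r" using q' by auto
  ultimately show ?thesis using addrs_append[OF q'(2), of xs] unfolding S_def by auto
qed

lemma bs_subtree: "q \<in> S \<Longrightarrow> bs q \<in> subtrees (Nd l r)"
proof -
  assume q: "q \<in> S"
  show ?thesis
  proof (cases "q \<in> addrs l")
    case True
    hence "q = [] \<or> hd q \<noteq> 2" using addrs_hd by fastforce
    hence "bs q = sub l q" unfolding bs_def by auto
    then show ?thesis using sub_subtrees[OF True] by simp
  next
    case False
    then obtain q' where q': "q = 2 # q'" "q' \<in> addrs r" using q unfolding S_def by auto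
    hence "bs q = sub r q'" unfolding bs_def by simp
    then show ?thesis using sub_subtrees[OF q'(2)] by simp
  qed
qed

lemma bs_root: "bs [] = l" unfolding bs_def by simp

lemma children_S:
  assumes "p \<in> S"
  shows "children S p = (if p = [] then (if isLf l then {2} else {0,1,2})
                          else (if isLf (bs p) then {} else {0,1}))"
proof (cases "p = []")
  case True
  have "[c] \<in> S \<longleftrightarrow> c = 2 \<or> ((\<exists>a b. l = Nd a b) \<and> (c = 0 \<or> c = 1))" for c
  proof -
    have "[c] \<in> addrs l \<longleftrightarrow> (\<exists>a b. l = Nd a b) \<and> (c = 0 \<or> c = 1)"
      using child_addr[OF addrs_root[of l], of c] by simp
    moreover have "[c] \<in> Cons 2 ` addrs r \<longleftrightarrow> c = 2" by (auto simp: addrs_root)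
    ultimately show ?thesis unfolding S_def by auto
  qed
  then show ?thesis using True unfolding children_def isLf_def by (cases l) auto
next
  case False
  have "p @ [c] \<in> S \<longleftrightarrow> (\<exists>a b. bs p = Nd a b) \<and> (c = 0 \<or> c = 1)" for c
    using ext[OF assms False, of "[c]"] by (cases "bs p") (auto simp: image_iff addrs_root)
  then show ?thesis using False unfolding children_def isLf_def by (cases "bs p") auto
qed

lemma tdeg_S:
  assumes "p \<in> S"
  shows "tdeg (aET S) (enc p) = (if isLf (bs p) then 1 else 3)"
  using tdeg_aET[OF S_finite S_pclosed assms] children_S[OF assms] bs_root
  by (cases "p = []") (auto simp: isLf_def)

lemma leaf_exists:
  assumes "e \<in> E" shows "\<exists>p\<in>S. bs p = Lf e"
proof -
  have "e \<in> items l \<or> e \<in> items r" using assms itE by auto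
  then show ?thesis
  proof
    assume "e \<in> items l"
    then obtain q where q: "q \<in> addrs l" "sub l q = Lf e" using items_addrs[of l] by auto
    hence "q = [] \<or> hd q \<noteq> 2" using addrs_hd by fastforce
    hence "bs q = Lf e" unfolding bs_def using q by auto
    then show ?thesis using q(1) unfolding S_def by auto
  next
    assume "e \<in> items r"
    then obtain q where q: "q \<in> addrs r" "sub r q = Lf e" using items_addrs[of r] by auto
    hence "bs (2 # q) = Lf e" unfolding bs_def by simp
    then show ?thesis using q(1) unfolding S_def by auto
  qed
qed

lemma leaf_uniq:
  assumes "p1 \<in> S" "p2 \<in> S" "bs p1 = Lf e" "bs p2 = Lf e"
  shows "p1 = p2"
proof -
  have A: "x \<in> items l" if "q \<in> addrs l" "sub l q = Lf x" for q x using that items_addrs[of l] by auto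
  have B: "x \<in> items r" if "q \<in> addrs r" "sub r q = Lf x" for q x using that items_addrs[of r] by auto
  have cl: "bs q = sub l q" if "q \<in> addrs l" for q
  proof -
    have "q = [] \<or> hd q \<noteq> 2" using addrs_hd[OF that] by fastforce
    then show ?thesis unfolding bs_def by auto
  qed
  show ?thesis
  proof (cases "p1 \<in> addrs l")
    case T1: True
    show ?thesis
    proof (cases "p2 \<in> addrs l")
      case True
      then show ?thesis using leaf_unique[OF lr_wf(1) T1 True] assms cl T1 by simp
    next
      case False
      then obtain q2 where "p2 = 2 # q2" "q2 \<in> addrs r" using assms(2) unfolding S_def by auto
      hence "e \<in> items r" using B assms(4) unfolding bs_def by simp
      moreover have "e \<in> items l" using A T1 assms(3) cl by simp
      ultimately show ?thesis using lr_wf(3) by auto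
    qed
  next
    case F1: False
    then obtain q1 where q1: "p1 = 2 # q1" "q1 \<in> addrs r" using assms(1) unfolding S_def by auto
    show ?thesis
    proof (cases "p2 \<in> addrs l")
      case True
      have "e \<in> items r" using B q1 assms(3) unfolding bs_def by simp
      moreover have "e \<in> items l" using A True assms(4) cl by simp
      ultimately show ?thesis using lr_wf(3) by auto
    next
      case False
      then obtain q2 where q2: "p2 = 2 # q2" "q2 \<in> addrs r" using assms(2) unfolding S_def by auto
      have "sub r q1 = Lf e" "sub r q2 = Lf e" using q1 q2 assms(3,4) unfolding bs_def by auto
      then show ?thesis using leaf_unique[OF lr_wf(2) q1(2) q2(2)] q1 q2 by simp
    qed
  qed
qed

definition la :: "'a set \<Rightarrow> nat list" where "la e = (THE p. p \<in> S \<and> bs p = Lf e)"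

lemma la_prop: "e \<in> E \<Longrightarrow> la e \<in> S \<and> bs (la e) = Lf e"
  unfolding la_def using leaf_exists leaf_uniq by (smt (verit, best) theI)

lemma la_eq: "e \<in> E \<Longrightarrow> p \<in> S \<Longrightarrow> bs p = Lf e \<Longrightarrow> la e = p"
  using la_prop leaf_uniq by blast

definition L :: "'a set \<Rightarrow> nat" where "L e = enc (la e)"

lemma items_bs: "q \<in> S \<Longrightarrow> items (bs q) \<subseteq> E"
  using bs_subtree subtrees_items itE by blast

lemma BD: "branch_decomp E (enc ` S) (aET S) L"
  unfolding branch_decomp_def
proof (intro conjI ballI)
  show "is_tree (enc ` S) (aET S)" using Ttree .
  fix n assume "n \<in> enc ` S"
  then obtain p where "p \<in> S" "n = enc p" by auto
  then show "tdeg (aET S) n = 1 \<or> tdeg (aET S) n = 3" using tdeg_S by simp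
next
  show "bij_betw L E {t \<in> enc ` S. tdeg (aET S) t = 1}"
    unfolding bij_betw_def
  proof
    show "inj_on L E"
    proof (rule inj_onI)
      fix e1 e2 assume "e1 \<in> E" "e2 \<in> E" "L e1 = L e2"
      hence "la e1 = la e2" unfolding L_def by simp
      moreover have "bs (la e1) = Lf e1" "bs (la e2) = Lf e2"
        using la_prop[OF \<open>e1 \<in> E\<close>] la_prop[OF \<open>e2 \<in> E\<close>] by auto
      ultimately have "Lf e1 = Lf e2" by metis
      then show "e1 = e2" by simp
    qed
    show "L ` E = {t \<in> enc ` S. tdeg (aET S) t = 1}"
    proof
      show "L ` E \<subseteq> {t \<in> enc ` S. tdeg (aET S) t = 1}"
      proof
        fix n assume "n \<in> L ` E"
        then obtain e where e: "e \<in> E" "n = enc (la e)" unfolding L_def by auto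
        have "la e \<in> S" "isLf (bs (la e))" using la_prop[OF e(1)] unfolding isLf_def by auto
        then show "n \<in> {t \<in> enc ` S. tdeg (aET S) t = 1}" using tdeg_S e(2) by simp
      qed
      show "{t \<in> enc ` S. tdeg (aET S) t = 1} \<subseteq> L ` E"
      proof
        fix n assume "n \<in> {t \<in> enc ` S. tdeg (aET S) t = 1}"
        then obtain p where p: "p \<in> S" "n = enc p" "tdeg (aET S) (enc p) = 1" by auto
        hence "isLf (bs p)" using tdeg_S by (auto split: if_splits)
        then obtain e where e: "bs p = Lf e" unfolding isLf_def by auto
        have "e \<in> E" using items_bs[OF p(1)] e by auto
        hence "L e = n" using la_eq[OF _ p(1) e] p(2) unfolding L_def by simp
        then show "n \<in> L ` E" using \<open>e \<in> E\<close> by blast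
      qed
    qed
  qed
qed

lemma L_comp:
  assumes "q \<in> S" "q \<noteq> []" "e \<in> E"
  shows "L e \<in> enc ` desc S q \<longleftrightarrow> e \<in> items (bs q)"
proof
  assume "L e \<in> enc ` desc S q"
  then obtain xs where xs: "q @ xs \<in> S" "L e = enc (q @ xs)" unfolding desc_def by auto
  hence "la e = q @ xs" unfolding L_def by simp
  hence "bs (q @ xs) = Lf e" using la_prop[OF assms(3)] by simp
  hence "sub (bs q) xs = Lf e" "xs \<in> addrs (bs q)" using ext[OF assms(1,2), of xs] xs(1) by auto
  then show "e \<in> items (bs q)" using items_addrs[of "bs q"] by auto
next
  assume "e \<in> items (bs q)"
  then obtain xs where xs: "xs \<in> addrs (bs q)" "sub (bs q) xs = Lf e" using items_addrs[of "bs q"] by auto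
  hence "q @ xs \<in> S" "bs (q @ xs) = Lf e" using ext[OF assms(1,2), of xs] by auto
  hence "la e = q @ xs" using la_eq[OF assms(3)] by simp
  then show "L e \<in> enc ` desc S q" unfolding L_def desc_def using \<open>q @ xs \<in> S\<close> by auto
qed

lemma width:
  assumes f: "f \<in> aET S"
  shows "\<exists>s\<in>subtrees (Nd l r). edge_width V E (aET S) L f \<le> card (bnd E (items s))"
proof -
  obtain p c where pc: "p @ [c] \<in> S" "f = {enc p, enc (p @ [c])}" using f by (rule aET_cases)
  define q where "q = p @ [c]"
  have q: "q \<in> S" "q \<noteq> []" using pc unfolding q_def by auto
  define I where "I = items (bs q)"
  have fe: "{enc p, enc q} \<in> aET S" using f pc unfolding q_def by simp
  have Cq: "comp_minus (aET S) f (enc q) = enc ` desc S q"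
    using comp_desc[OF S_pclosed pc(1)] pc(2) unfolding q_def by simp
  have dj: "comp_minus (aET S) f (enc p) \<inter> comp_minus (aET S) f (enc q) = {}"
    using tree_disj[OF Ttree fe] pc(2) unfolding q_def by simp
  have inq: "e \<in> I" if "e \<in> E" "L e \<in> comp_minus (aET S) f (enc q)" for e
    using that L_comp[OF q] Cq unfolding I_def by simp
  have inp: "e \<notin> I" if "e \<in> E" "L e \<in> comp_minus (aET S) f (enc p)" for e
    using that L_comp[OF q] Cq dj unfolding I_def by blast
  have sub: "{w\<in>V. \<exists>u v. f = {u, v} \<and>
      (\<exists>e1\<in>E. \<exists>e2\<in>E. w \<in> e1 \<and> w \<in> e2 \<and>
         L e1 \<in> comp_minus (aET S) f u \<and> L e2 \<in> comp_minus (aET S) f v)} \<subseteq> bnd E I"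
  proof
    fix w assume "w \<in> {w\<in>V. \<exists>u v. f = {u, v} \<and>
      (\<exists>e1\<in>E. \<exists>e2\<in>E. w \<in> e1 \<and> w \<in> e2 \<and>
         L e1 \<in> comp_minus (aET S) f u \<and> L e2 \<in> comp_minus (aET S) f v)}"
    then obtain u v e1 e2 where w: "f = {u,v}" "e1 \<in> E" "e2 \<in> E" "w \<in> e1" "w \<in> e2"
      "L e1 \<in> comp_minus (aET S) f u" "L e2 \<in> comp_minus (aET S) f v" by blast
    have "(u = enc p \<and> v = enc q) \<or> (u = enc q \<and> v = enc p)" using w(1) pc(2) unfolding q_def by (auto simp: doubleton_eq_iff)
    then have "(e1 \<notin> I \<and> e2 \<in> I) \<or> (e1 \<in> I \<and> e2 \<notin> I)" using inq inp w by blast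
    moreover have "I \<subseteq> E" using items_bs[OF q(1)] unfolding I_def .
    ultimately show "w \<in> bnd E I" unfolding bnd_def using w by blast
  qed
  have "finite (bnd E I)" unfolding bnd_def using finE by (meson Diff_subset Sup_subset_mono finite_Int finite_subset)
  hence "edge_width V E (aET S) L f \<le> card (bnd E I)" unfolding edge_width_def using sub by (rule card_mono)
  then show ?thesis using bs_subtree[OF q(1)] unfolding I_def by blast
qed

theorem construct:
  "\<exists>N ET L. branch_decomp E N ET L \<and>
     (\<forall>f\<in>ET. \<exists>s\<in>subtrees (Nd l r). edge_width V E ET L f \<le> card (bnd E (items s)))"
  using BD width by blast

end



lemma tree_finite_ET: "is_tree N ET \<Longrightarrow> finite ET"
proof -
  assume T: "is_tree N ET"
  hence "ET \<subseteq> Pow N" unfolding is_tree_def by auto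
  moreover have "finite N" using T unfolding is_tree_def by simp
  ultimately show ?thesis by (meson finite_Pow_iff finite_subset)
qed

lemma tree_edge_form: "is_tree N ET \<Longrightarrow> g \<in> ET \<Longrightarrow> \<exists>a b. a \<noteq> b \<and> g = {a,b}"
  unfolding is_tree_def by blast

locale bdl =
  fixes V :: "'a set" and E :: "'a set set" and k :: nat and N :: "nat set" and ET :: "nat set set"
    and L :: "'a set \<Rightarrow> nat"
  assumes G: "simple_graph V E" and k3: "k \<ge> 3" and BD: "branch_decomp E N ET L"
    and W: "\<And>f. f \<in> ET \<Longrightarrow> edge_width V E ET L f < k"
begin

lemma T: "is_tree N ET" using BD unfolding branch_decomp_def by simp

lemma deg: "t \<in> N \<Longrightarrow> tdeg ET t = 1 \<or> tdeg ET t = 3" using BD unfolding branch_decomp_def by simp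

lemma bij: "bij_betw L E {t\<in>N. tdeg ET t = 1}" using BD unfolding branch_decomp_def by simp

lemma LN: "e \<in> E \<Longrightarrow> L e \<in> N \<and> tdeg ET (L e) = 1"
  using bij unfolding bij_betw_def by auto

lemma Linj: "e1 \<in> E \<Longrightarrow> e2 \<in> E \<Longrightarrow> L e1 = L e2 \<Longrightarrow> e1 = e2"
  using bij unfolding bij_betw_def inj_on_def by auto

lemma Lsurj: "t \<in> N \<Longrightarrow> tdeg ET t = 1 \<Longrightarrow> \<exists>e\<in>E. L e = t"
proof -
  assume "t \<in> N" "tdeg ET t = 1"
  hence "t \<in> L ` E" using bij unfolding bij_betw_def by auto
  then show ?thesis by auto
qed

definition FF :: "nat \<Rightarrow> nat \<Rightarrow> 'a set set" where
  "FF u v = {e\<in>E. L e \<in> comp_minus ET {u,v} v}"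

lemma bnd_bound:
  assumes e: "{u,v} \<in> ET"
  shows "card (bnd E (FF u v)) < k"
proof -
  let ?S = "{w\<in>V. \<exists>u' v'. {u,v} = {u', v'} \<and>
      (\<exists>e1\<in>E. \<exists>e2\<in>E. w \<in> e1 \<and> w \<in> e2 \<and>
         L e1 \<in> comp_minus ET {u,v} u' \<and> L e2 \<in> comp_minus ET {u,v} v')}"
  have "bnd E (FF u v) \<subseteq> ?S"
  proof
    fix w assume "w \<in> bnd E (FF u v)"
    then obtain e1 e2 where w: "w \<in> e1" "e1 \<in> FF u v" "w \<in> e2" "e2 \<in> E - FF u v" unfolding bnd_def by auto
    have "e1 \<in> E" "L e1 \<in> comp_minus ET {u,v} v" using w(2) unfolding FF_def by auto
    moreover have "e2 \<in> E" using w by auto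
    moreover have "L e2 \<in> comp_minus ET {u,v} u"
      using tree_cover[OF T e LN[OF \<open>e2 \<in> E\<close>, THEN conjunct1]] w(4) unfolding FF_def by auto
    moreover have "w \<in> V" using simple_edge_sub[OF G \<open>e1 \<in> E\<close>] w(1) by auto
    ultimately show "w \<in> ?S" using w(1,3) by (auto simp: insert_commute)
  qed
  moreover have "finite ?S" using G unfolding simple_graph_def by simp
  ultimately have "card (bnd E (FF u v)) \<le> card ?S" by (rule card_mono[rotated])
  moreover have "card ?S = edge_width V E ET L {u,v}" unfolding edge_width_def by simp
  ultimately show ?thesis using W[OF e] by simp
qed

lemma R:
  assumes "{u,v} \<in> ET" "u \<noteq> v"
  shows "FF u v \<noteq> {} \<and> okset E k (FF u v)"
  using assms
proof (induction "card (comp_minus ET {u,v} v)" arbitrary: u v rule: less_induct)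
  case less
  have vN: "v \<in> N" using tree_edge_N[OF T less.prems(1)] by simp
  have finET: "finite ET" using tree_finite_ET[OF T] .
  define Nb where "Nb = {e\<in>ET. v \<in> e}"
  have uvNb: "{u,v} \<in> Nb" unfolding Nb_def using less.prems by auto
  have finNb: "finite Nb" using finET unfolding Nb_def by simp
  have finC: "finite (comp_minus ET {u,v} v)" using comp_finite[OF T less.prems(1)] by simp
  have edge_form: "\<exists>w. g = {v,w} \<and> w \<noteq> v" if "g \<in> Nb" for g
  proof -
    have "g \<in> ET" using that unfolding Nb_def by simp
    then obtain a b where "a \<noteq> b" "g = {a,b}" using tree_edge_form[OF T] by blast
    then show ?thesis using that unfolding Nb_def by auto
  qed
  from deg[OF vN] show ?case
  proof
    assume d1: "tdeg ET v = 1"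
    hence "card Nb = 1" unfolding tdeg_def Nb_def by simp
    then obtain g0 where "Nb = {g0}" by (rule card_1_singletonE)
    hence Nb1: "Nb = {{u,v}}" using uvNb by simp
    have "comp_minus ET {u,v} v \<subseteq> {v}"
    proof -
      have "{w. {v,w} \<in> ET \<and> w \<noteq> u} = {}"
      proof (rule ccontr)
        assume "{w. {v,w} \<in> ET \<and> w \<noteq> u} \<noteq> {}"
        then obtain w where "{v,w} \<in> ET" "w \<noteq> u" by auto
        hence "{v,w} \<in> Nb" unfolding Nb_def by auto
        with Nb1 \<open>w \<noteq> u\<close> show False by (auto simp: doubleton_eq_iff)
      qed
      then show ?thesis using tree_split[OF T less.prems(1)] by auto
    qed
    hence C1: "comp_minus ET {u,v} v = {v}" using comp_self by auto
    obtain e0 where e0: "e0 \<in> E" "L e0 = v" using Lsurj[OF vN d1] by auto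
    have "FF u v = {e0}" unfolding FF_def C1 using e0 Linj by auto
    moreover have "okset0 E k {e0}" using edge_card[OF G e0(1)] k3 by (intro okset_single) auto
    ultimately show ?thesis unfolding okset0_def by auto
  next
    assume d3: "tdeg ET v = 3"
    hence "card Nb = 3" unfolding tdeg_def Nb_def by simp
    hence "card (Nb - {{u,v}}) = 2" using uvNb finNb by simp
    then obtain g1 g2 where g: "Nb - {{u,v}} = {g1,g2}" "g1 \<noteq> g2" unfolding card_2_iff by blast
    obtain w1 where w1: "g1 = {v,w1}" "w1 \<noteq> v" using edge_form g by blast
    obtain w2 where w2: "g2 = {v,w2}" "w2 \<noteq> v" using edge_form g by blast
    have g1E: "{v,w1} \<in> ET" "{v,w1} \<noteq> {u,v}" and g2E: "{v,w2} \<in> ET" "{v,w2} \<noteq> {u,v}"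
      using g w1 w2 unfolding Nb_def by auto
    have w1u: "w1 \<noteq> u" using g1E by auto
    have w2u: "w2 \<noteq> u" using g2E by auto
    have w12: "w1 \<noteq> w2" using g w1 w2 by auto
    have nbrs: "w = w1 \<or> w = w2" if "{v,w} \<in> ET" "w \<noteq> u" for w
    proof -
      have "{v,w} \<in> Nb - {{u,v}}" using that unfolding Nb_def by (auto simp: doubleton_eq_iff)
      then show ?thesis using g w1 w2 by (auto simp: doubleton_eq_iff)
    qed
    have Csub: "comp_minus ET {u,v} v \<subseteq> {v} \<union> comp_minus ET {v,w1} w1 \<union> comp_minus ET {v,w2} w2"
      using tree_split[OF T less.prems(1)] nbrs by blast
    have vnotL: "L e \<noteq> v" if "e \<in> E" for e using LN[OF that] d3 by auto
    have FFeq: "FF u v = FF v w1 \<union> FF v w2"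
    proof
      show "FF u v \<subseteq> FF v w1 \<union> FF v w2" using Csub vnotL unfolding FF_def by blast
      show "FF v w1 \<union> FF v w2 \<subseteq> FF u v"
        using tree_sub[OF T less.prems(1) g1E(1) w1u] tree_sub[OF T less.prems(1) g2E(1) w2u]
        unfolding FF_def by blast
    qed
    have IH: "FF v w \<noteq> {} \<and> okset E k (FF v w)" if "{v,w} \<in> ET" "w \<noteq> u" for w
    proof (rule less.hyps)
      show "card (comp_minus ET {v,w} w) < card (comp_minus ET {u,v} v)"
        using tree_psub[OF T less.prems(1) that] finC by (simp add: psubset_card_mono)
      show "{v,w} \<in> ET" by fact
      show "v \<noteq> w" using tree_edge_neq[OF T that(1)] .
    qed
    have "okset0 E k (FF v w1 \<union> FF v w2)"
    proof (rule okset_join)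
      show "okset0 E k (FF v w1)" using IH[OF g1E(1) w1u] unfolding okset0_def by simp
      show "okset0 E k (FF v w2)" using IH[OF g2E(1) w2u] unfolding okset0_def by simp
      show "FF v w1 \<inter> FF v w2 = {}" using tree_disj2[OF T g1E(1) g2E(1) w12] unfolding FF_def by blast
      show "card (bnd E (FF v w1 \<union> FF v w2)) < k" using bnd_bound[OF less.prems(1)] FFeq by simp
    qed
    then show ?thesis using FFeq IH[OF g1E(1) w1u] unfolding okset0_def by auto
  qed
qed

lemma okE:
  assumes "E \<noteq> {}"
  shows "okset E k E"
proof -
  obtain e where e: "e \<in> E" using assms by auto
  have "tdeg ET (L e) = 1" using LN[OF e] by simp
  hence "{f\<in>ET. L e \<in> f} \<noteq> {}" unfolding tdeg_def by (metis card.empty zero_neq_one)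
  then obtain f where "f \<in> ET" by auto
  then obtain u v where uv: "u \<noteq> v" "f = {u,v}" using tree_edge_form[OF T] by blast
  have e1: "{u,v} \<in> ET" "{v,u} \<in> ET" using uv \<open>f \<in> ET\<close> by (auto simp: insert_commute)
  have cov: "E = FF u v \<union> FF v u"
  proof
    show "E \<subseteq> FF u v \<union> FF v u"
    proof
      fix e assume "e \<in> E"
      hence "L e \<in> comp_minus ET {u,v} u \<union> comp_minus ET {u,v} v"
        using tree_cover[OF T e1(1)] LN by blast
      then show "e \<in> FF u v \<union> FF v u" unfolding FF_def using \<open>e \<in> E\<close> by (auto simp: insert_commute)
    qed
    show "FF u v \<union> FF v u \<subseteq> E" unfolding FF_def by auto
  qed
  have "okset0 E k (FF u v \<union> FF v u)"
  proof (rule okset_join)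
    show "okset0 E k (FF u v)" using R[OF e1(1) uv(1)] unfolding okset0_def by simp
    show "okset0 E k (FF v u)" using R[OF e1(2) uv(1)[symmetric]] unfolding okset0_def by simp
    show "FF u v \<inter> FF v u = {}" using tree_disj[OF T e1(1)] unfolding FF_def by (auto simp: insert_commute)
    show "card (bnd E (FF u v \<union> FF v u)) < k" unfolding cov[symmetric] bnd_def using k3 by simp
  qed
  hence "okset0 E k E" by (simp only: cov[symmetric])
  then show ?thesis using assms unfolding okset0_def by blast
qed

end



lemma ex_wfbt: "finite A \<Longrightarrow> A \<noteq> {} \<Longrightarrow> \<exists>t. items t = A \<and> wfbt t"
proof (induction A rule: finite_ne_induct)
  case (singleton x) then show ?case by (intro exI[of _ "Lf x"]) simp
next
  case (insert x F)
  then obtain t where "items t = F" "wfbt t" by blast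
  then show ?case using insert by (intro exI[of _ "Nd (Lf x) t"]) auto
qed

lemma okset_singleton: "okset E k {e} \<longleftrightarrow> 0 < k \<or> True \<Longrightarrow> E = {e} \<Longrightarrow> 0 < k \<Longrightarrow> okset E k E"
proof -
  assume "E = {e}" "0 < k"
  have "bnd E {e} = {}" unfolding bnd_def using \<open>E = {e}\<close> by simp
  hence "okbt E k (Lf e)" unfolding okbt_def using \<open>0 < k\<close> by simp
  then show ?thesis unfolding okset_def using \<open>E = {e}\<close> by (intro exI[of _ "Lf e"]) simp
qed

lemma U_ok:
  assumes G: "simple_graph V E" and V: "V \<noteq> {}" and k3: "k \<ge> 3"
    and ok: "E = {} \<or> okset E k E"
  shows "\<exists>t. wfbt t \<and> items t = E \<union> {{v} | v. v \<in> V - \<Union>E} \<and>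
            (\<forall>s\<in>subtrees t. card (bnd (E \<union> {{v} | v. v \<in> V - \<Union>E}) (items s)) < k)"
proof -
  define I where "I = {{v} | v. v \<in> V - \<Union>E}"
  define U where "U = E \<union> I"
  have finV: "finite V" using G unfolding simple_graph_def by simp
  have finI: "finite I" unfolding I_def using finV by simp
  have EV: "\<Union>E \<subseteq> V" using G unfolding simple_graph_def by auto
  have EI: "E \<inter> I = {}" unfolding I_def by auto
  have bE: "bnd U P = bnd E P" if "P \<subseteq> E" for P
  proof -
    have "U - P = (E - P) \<union> I" unfolding U_def using that EI by auto
    moreover have "\<Union>P \<inter> \<Union>I = {}" using that unfolding I_def by auto
    ultimately show ?thesis unfolding bnd_def by auto
  qed
  have bI: "bnd U P = {}" if PI: "P \<subseteq> I" for P
  proof -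
    have "w \<notin> bnd U P" for w
    proof
      assume "w \<in> bnd U P"
      then obtain X Y where XY: "X \<in> P" "w \<in> X" "Y \<in> U - P" "w \<in> Y" unfolding bnd_def by auto
      then obtain v where v: "X = {v}" "v \<in> V - \<Union>E" using PI unfolding I_def by auto
      have "w = v" using XY v by simp
      show False
      proof (cases "Y \<in> E")
        case True then show False using XY v \<open>w = v\<close> by auto
      next
        case False
        hence "Y \<in> I" using XY unfolding U_def by auto
        then obtain v' where "Y = {v'}" unfolding I_def by auto
        hence "Y = X" using XY v \<open>w = v\<close> by simp
        then show False using XY by simp
      qed
    qed
    then show ?thesis by auto
  qed
  have bU: "bnd U U = {}" unfolding bnd_def by simp
  have k0: "0 < k" using k3 by simp
  have "\<exists>t. wfbt t \<and> items t = U \<and> (\<forall>s\<in>subtrees t. card (bnd U (items s)) < k)"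
  proof (cases "E = {}")
    case True
    have "V - \<Union>E \<noteq> {}" using V True by simp
    hence "I \<noteq> {}" unfolding I_def by auto
    then obtain t where t: "items t = I" "wfbt t" using ex_wfbt finI by blast
    have "\<forall>s\<in>subtrees t. card (bnd U (items s)) < k"
      using bI subtrees_items t(1) k0 by (metis card.empty)
    then show ?thesis using t True unfolding U_def by auto
  next
    case False
    then obtain tE where tE: "items tE = E" "okbt E k tE" using ok unfolding okset_def by blast
    have tEs: "\<forall>s\<in>subtrees tE. card (bnd U (items s)) < k"
      using tE bE subtrees_items unfolding okbt_def by metis
    show ?thesis
    proof (cases "I = {}")
      case True
      then show ?thesis using tE tEs unfolding U_def okbt_def by auto
    next
      case False
      then obtain tI where tI: "items tI = I" "wfbt tI" using ex_wfbt finI by blast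
      have tIs: "\<forall>s\<in>subtrees tI. card (bnd U (items s)) < k"
        using bI subtrees_items tI(1) k0 by (metis card.empty)
      have "wfbt (Nd tE tI)" using tE tI EI unfolding okbt_def by simp
      moreover have "items (Nd tE tI) = U" using tE tI unfolding U_def by simp
      moreover have "\<forall>s\<in>subtrees (Nd tE tI). card (bnd U (items s)) < k"
        using tEs tIs bU k0 \<open>items (Nd tE tI) = U\<close> by auto
      ultimately show ?thesis by blast
    qed
  qed
  then show ?thesis unfolding U_def I_def .
qed

lemma Sk_from_ok:
  assumes G: "simple_graph V E" and V: "V \<noteq> {}" and k3: "k \<ge> 3"
    and ok: "E = {} \<or> okset E k E"
  shows "has_Sk_tree_over_Fstar V E k"
proof -
  define U where "U = E \<union> {{v} | v. v \<in> V - \<Union>E}"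
  obtain t where t: "wfbt t" "items t = U" "\<forall>s\<in>subtrees t. card (bnd U (items s)) < k"
    using U_ok[OF assms] unfolding U_def by blast
  have EV: "\<Union>E \<subseteq> V" using G unfolding simple_graph_def by auto
  have finV: "finite V" using G unfolding simple_graph_def by simp
  interpret skc V E k t
  proof
    show "simple_graph V E" "3 \<le> k" "wfbt t" by (fact G, fact k3, fact t(1))
    show "\<Union>(items t) = V"
    proof
      show "\<Union>(items t) \<subseteq> V" using t(2) EV unfolding U_def by auto
      show "V \<subseteq> \<Union>(items t)"
      proof
        fix x assume "x \<in> V"
        show "x \<in> \<Union>(items t)"
        proof (cases "x \<in> \<Union>E")
          case True then show ?thesis using t(2) unfolding U_def by auto
        next
          case False
          hence "{x} \<in> items t" using t(2) \<open>x \<in> V\<close> unfolding U_def by blast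
          then show ?thesis by auto
        qed
      qed
    qed
    show "E \<subseteq> items t" using t(2) unfolding U_def by auto
    show "X \<subseteq> V \<and> finite X \<and> card X < k" if Xt: "X \<in> items t" for X
    proof (cases "X \<in> E")
      case True
      then show ?thesis using edge_card[OF G True] simple_edge_sub[OF G True] k3 by simp
    next
      case False
      then obtain v where "X = {v}" "v \<in> V" using Xt t(2) unfolding U_def by auto
      then show ?thesis using k3 by simp
    qed
    show "card (bnd (items t) (items s)) < k" if "s \<in> subtrees t" for s using t that by simp
  qed
  show ?thesis using has_tree .
qed

theorem main:
  fixes V :: "'a set" and E :: "'a set set" and k :: nat
  assumes G: "simple_graph V E" and V: "V \<noteq> {}" and k3: "k \<ge> 3"
  shows "branchwidth V E < k \<longleftrightarrow> has_Sk_tree_over_Fstar V E k"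
proof
  have finE: "finite E" using simple_finite_E[OF G] .
  have finUE: "finite (\<Union>E)" using G finE unfolding simple_graph_def by auto
  assume bw: "branchwidth V E < k"
  show "has_Sk_tree_over_Fstar V E k"
  proof (cases "card E \<le> 1")
    case True
    hence "card E = 0 \<or> card E = 1" by linarith
    hence "E = {} \<or> (\<exists>e. E = {e})"
    proof
      assume "card E = 0" then show ?thesis using finE by simp
    next
      assume "card E = 1" then show ?thesis by (meson card_1_singletonE)
    qed
    hence "E = {} \<or> okset E k E"
    proof
      assume "\<exists>e. E = {e}"
      then obtain e where "E = {e}" by blast
      have "bnd E {e} = {}" unfolding bnd_def using \<open>E = {e}\<close> by simp
      hence "okbt E k (Lf e)" unfolding okbt_def using k3 by simp
      then show ?thesis unfolding okset_def using \<open>E = {e}\<close> by (intro disjI2 exI[of _ "Lf e"]) simp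
    qed simp
    then show ?thesis using Sk_from_ok[OF G V k3] by simp
  next
    case False
    hence E2: "card E \<ge> 2" by simp
    obtain t where t: "items t = E" "wfbt t" using ex_wfbt finE E2 by (metis card.empty not_numeral_le_zero)
    obtain l r where lr: "t = Nd l r"
    proof (cases t)
      case (Lf x)
      hence "E = {x}" using t by simp
      then show ?thesis using E2 by simp
    next
      case (Nd l r) then show ?thesis using that by simp
    qed
    interpret bdc V E l r using t lr finUE by unfold_locales auto
    define W where "W = {w. \<exists>N ET L. branch_decomp E N ET L \<and> w = decomp_width V E ET L}"
    have "W \<noteq> {}" using construct unfolding W_def by blast
    hence "Inf W \<in> W" by (rule Inf_nat_def1)
    moreover have "branchwidth V E = Inf W" unfolding branchwidth_def W_def using False by simp
    ultimately obtain N ET L where bdL: "branch_decomp E N ET L" "decomp_width V E ET L < k"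
      using bw unfolding W_def by auto
    have T: "is_tree N ET" using bdL(1) unfolding branch_decomp_def by simp
    have "edge_width V E ET L f < k" if "f \<in> ET" for f
    proof -
      have "edge_width V E ET L f \<le> decomp_width V E ET L"
        unfolding decomp_width_def using that tree_finite_ET[OF T] by simp
      then show ?thesis using bdL(2) by simp
    qed
    then interpret bdl V E k N ET L using G k3 bdL(1) by unfold_locales auto
    have "okset E k E" using okE E2 by (metis card.empty not_numeral_le_zero)
    then show ?thesis using Sk_from_ok[OF G V k3] by simp
  qed
next
  have finE: "finite E" using simple_finite_E[OF G] .
  have finUE: "finite (\<Union>E)" using G finE unfolding simple_graph_def by auto
  assume "has_Sk_tree_over_Fstar V E k"
  then obtain N ET \<alpha> where sk: "is_tree N ET" "ET \<noteq> {}"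
    "\<forall>x y. {x, y} \<in> ET \<and> x \<noteq> y \<longrightarrow> \<alpha> x y \<in> vecS V E k \<and> \<alpha> y x = sep_inv (\<alpha> x y)"
    "\<forall>t\<in>N. {\<alpha> x t | x. {x, t} \<in> ET \<and> x \<noteq> t} \<in> Fstar V E k"
    unfolding has_Sk_tree_over_Fstar_def by blast
  show "branchwidth V E < k"
  proof (cases "card E \<le> 1")
    case True then show ?thesis unfolding branchwidth_def using k3 by simp
  next
    case False
    hence E2: "card E \<ge> 2" by simp
    hence En: "E \<noteq> {}" by auto
    interpret skt V E k N ET \<alpha> using G k3 sk by unfold_locales auto
    have "okset E k E" using okE[OF sk(2) En] .
    then obtain t where t: "items t = E" "okbt E k t" unfolding okset_def by blast
    obtain l r where lr: "t = Nd l r"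
    proof (cases t)
      case (Lf x)
      hence "E = {x}" using t by simp
      then show ?thesis using E2 by simp
    next
      case (Nd l r) then show ?thesis using that by simp
    qed
    interpret bdc V E l r using t lr finUE unfolding okbt_def by unfold_locales auto
    obtain N' ET' L where bd: "branch_decomp E N' ET' L"
      "\<forall>f\<in>ET'. \<exists>s\<in>subtrees (Nd l r). edge_width V E ET' L f \<le> card (bnd E (items s))"
      using construct by blast
    have T': "is_tree N' ET'" using bd(1) unfolding branch_decomp_def by simp
    have ew: "edge_width V E ET' L f < k" if "f \<in> ET'" for f
      using bd(2) that t(2) lr unfolding okbt_def by fastforce
    have "ET' \<noteq> {}"
    proof -
      obtain e where "e \<in> E" using En by auto
      hence "tdeg ET' (L e) = 1" using bd(1) unfolding branch_decomp_def bij_betw_def by auto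
      hence "{f\<in>ET'. L e \<in> f} \<noteq> {}" unfolding tdeg_def by (metis card.empty zero_neq_one)
      then show ?thesis by auto
    qed
    hence dw: "decomp_width V E ET' L < k" unfolding decomp_width_def
      using tree_finite_ET[OF T'] ew by simp
    have "branchwidth V E \<le> decomp_width V E ET' L"
      unfolding branchwidth_def using False bd(1) by (auto intro!: wellorder_Inf_le1)
    then show ?thesis using dw by simp
  qed
qed


theorem lemma5p4:
  fixes V :: "'a set" and E :: "'a set set" and k :: nat
  assumes "simple_graph V E" and "V \<noteq> {}" and "k \<ge> 3"
  shows "branchwidth V E < k \<longleftrightarrow> has_Sk_tree_over_Fstar V E k"
  using main[OF assms] .

end
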